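(* Fix $t\ge0$ and let $\phi$ be a smooth section over $\{t\}\times\mathbb R^3$ with finite $H^{1,\frac{p+q}{2}}$ norm. (i) If $-1<p$ and $0<p+1+q$, then $$\int_{\{t<r\}}\tau_-^p\tau_+^q|\phi|^2dx\lesssim\int_{\{t<r\}}\tau_-^{p+2}\tau_+^q|r^{-1}D_r(r\phi)|^2dx.$$ (ii) If $-1<p$ and $q<p+1$, then $$\int_{\{r<t\}}\tau_-^p\tau_+^q|\phi|^2dx\lesssim\int_{\{r<t\}}\tau_-^{p+2}\tau_+^q|r^{-1}D_r(r\phi)|^2dx.$$ (iii) Consequently, if $-1<p$ and $|q|<p+1$, then $\int_{\mathbb R^3}\tau_-^p\tau_+^q|\phi|^2dx\lesssim\int_{\mathbb R^3}\tau_-^{p+2}\tau_+^q|r^{-1}D_r(r\phi)|^2dx$. The implicit constants depend only on $p,q$.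
   Context: $r=|x|$, $\tau_+^2=1+(t+r)^2$, $\tau_-^2=1+(t-r)^2$. $\phi$ is a section of the trivial complex line bundle with hermitian metric and compatible connection $D$; $D_r=D_{\partial_r}$, and $\underline D$ is the spatial part of $D$. $\|\phi\|^2_{H^{1,a}}=\sum_{|I|\le1}\int(1+r^2)^{a+|I|}|\underline D^I\phi|^2dx$. *)

theory Defs
  imports "HOL-Analysis.Analysis"
begin

fun Ck :: "nat \<Rightarrow> ('a::euclidean_space \<Rightarrow> 'b::real_normed_vector) set" where
  "Ck 0 = {f. continuous_on UNIV f}"
| "Ck (Suc k) = {f. f differentiable_on UNIV \<and>
      (\<forall>i\<in>Basis. (\<lambda>x. frechet_derivative f (at x) i) \<in> Ck k)}"

definition smooth :: "('a::euclidean_space \<Rightarrow> 'b::real_normed_vector) \<Rightarrow> bool" where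
  "smooth f \<longleftrightarrow> (\<forall>k. f \<in> Ck k)"

definition tau_plus :: "real \<Rightarrow> real^3 \<Rightarrow> real" where
  "tau_plus t x = sqrt (1 + (t + norm x)\<^sup>2)"

definition tau_minus :: "real \<Rightarrow> real^3 \<Rightarrow> real" where
  "tau_minus t x = sqrt (1 + (t - norm x)\<^sup>2)"

text \<open>Hermitian connection on the trivial complex line bundle over R^3 (spatial part):
  D = d + i A with a real 1-form A (identified with a vector field).
  cov_deriv A phi x v is D_v phi at x.\<close>
definition cov_deriv :: "(real^3 \<Rightarrow> real^3) \<Rightarrow> (real^3 \<Rightarrow> complex) \<Rightarrow> real^3 \<Rightarrow> real^3 \<Rightarrow> complex" where
  "cov_deriv A phi x v = frechet_derivative phi (at x) v + \<i> * complex_of_real (A x \<bullet> v) * phi x"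

definition radial_cov_deriv :: "(real^3 \<Rightarrow> real^3) \<Rightarrow> (real^3 \<Rightarrow> complex) \<Rightarrow> real^3 \<Rightarrow> complex" where
  "radial_cov_deriv A phi x = cov_deriv A phi x (x /\<^sub>R norm x)"

definition rad_term :: "(real^3 \<Rightarrow> real^3) \<Rightarrow> (real^3 \<Rightarrow> complex) \<Rightarrow> real^3 \<Rightarrow> complex" where
  "rad_term A phi x = radial_cov_deriv A (\<lambda>y. complex_of_real (norm y) * phi y) x / complex_of_real (norm x)"

definition H1a_norm_sq :: "real \<Rightarrow> (real^3 \<Rightarrow> real^3) \<Rightarrow> (real^3 \<Rightarrow> complex) \<Rightarrow> ennreal" where
  "H1a_norm_sq a A phi =
     (\<integral>\<^sup>+ x. ennreal ((1 + (norm x)\<^sup>2) powr a * (cmod (phi x))\<^sup>2) \<partial>lborel)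
     + (\<Sum>j\<in>(UNIV::3 set). \<integral>\<^sup>+ x. ennreal ((1 + (norm x)\<^sup>2) powr (a + 1)
            * (cmod (cov_deriv A phi x (axis j 1)))\<^sup>2) \<partial>lborel)"

definition wint :: "(real^3) set \<Rightarrow> real \<Rightarrow> real \<Rightarrow> real \<Rightarrow> (real^3 \<Rightarrow> complex) \<Rightarrow> ennreal" where
  "wint S t p q f = (\<integral>\<^sup>+ x \<in> S. ennreal (tau_minus t x powr p * tau_plus t x powr q * (cmod (f x))\<^sup>2) \<partial>lborel)"

end

theory Submission
  imports Defs
begin

lemma one_plus_sq_ne0[simp]: "1 + (z::real)\<^sup>2 \<noteq> 0"
  by (metis add_pos_nonneg less_numeral_extra(1) zero_le_power2 less_irrefl)

lemma one_plus_sq_gt0[simp]: "0 < 1 + (z::real)\<^sup>2"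
  by (simp add: add_pos_nonneg)

definition Cw :: "real \<Rightarrow> real" where
  "Cw b = 2 powr (\<bar>b\<bar>/2) * sqrt 2 powr (b+1) / (b+1)"

lemma sqrt_pow_le_lin:
  fixes v b :: real
  assumes "0 \<le> v"
  shows "sqrt (1+v\<^sup>2) powr b \<le> 2 powr (\<bar>b\<bar>/2) * (1+v) powr b"
proof (cases "b \<ge> 0")
  case True
  have "sqrt (1+v\<^sup>2) \<le> 1+v"
    using assms by (intro real_le_lsqrt) (auto simp: power2_eq_square algebra_simps)
  then have "sqrt (1+v\<^sup>2) powr b \<le> (1+v) powr b" using True by (intro powr_mono2) auto
  also have "\<dots> \<le> 2 powr (\<bar>b\<bar>/2) * (1+v) powr b"
  proof -
    have "1 \<le> 2 powr (\<bar>b\<bar>/2)" by (rule ge_one_powr_ge_zero) auto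
    then show ?thesis using mult_right_mono[of 1 "2 powr (\<bar>b\<bar>/2)" "(1+v) powr b"] by simp
  qed
  finally show ?thesis .
next
  case False
  have s2: "sqrt 2 > 0" by simp
  have "(1+v) / sqrt 2 \<le> sqrt (1+v\<^sup>2)"
  proof -
    have "((1+v) / sqrt 2)\<^sup>2 \<le> 1+v\<^sup>2"
    proof -
      have "(1+v)\<^sup>2 \<le> 2*(1+v\<^sup>2)" using zero_le_square[of "v - 1"] by (simp add: power2_eq_square algebra_simps)
      then show ?thesis by (simp add: power_divide)
    qed
    then show ?thesis using assms by (intro real_le_rsqrt) auto
  qed
  then have "sqrt (1+v\<^sup>2) powr b \<le> ((1+v) / sqrt 2) powr b"
    using False assms by (intro powr_mono2') auto
  also have "\<dots> = (1+v) powr b * sqrt 2 powr (-b)"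
    using assms by (subst powr_divide) (auto simp: powr_minus divide_inverse)
  also have "sqrt 2 powr (-b) = 2 powr (\<bar>b\<bar>/2)"
  proof -
    have "sqrt 2 = 2 powr (1/2)" by (simp add: powr_half_sqrt)
    then have "sqrt 2 powr (-b) = 2 powr (1/2 * (-b))" by (simp add: powr_powr)
    then show ?thesis using False by simp
  qed
  finally show ?thesis by (simp add: mult.commute)
qed

lemma Cw_final:
  fixes b d :: real
  assumes b: "b > -1" and d: "0 \<le> d"
  shows "2 powr (\<bar>b\<bar>/2) * (((1+d) powr (b+1) - 1) / (b+1)) \<le> Cw b * sqrt (1+d\<^sup>2) powr (b+1)"
proof -
  have "1 + d \<le> sqrt 2 * sqrt (1+d\<^sup>2)"
  proof -
    have "(1+d)\<^sup>2 \<le> 2*(1+d\<^sup>2)" using zero_le_square[of "d - 1"] by (simp add: power2_eq_square algebra_simps)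
    then have "1 + d \<le> sqrt (2*(1+d\<^sup>2))" using d by (intro real_le_rsqrt) auto
    then show ?thesis by (metis real_sqrt_mult)
  qed
  then have "(1+d) powr (b+1) \<le> (sqrt 2 * sqrt (1+d\<^sup>2)) powr (b+1)"
    using b d by (intro powr_mono2) auto
  also have "\<dots> = sqrt 2 powr (b+1) * sqrt (1+d\<^sup>2) powr (b+1)"
    by (simp add: powr_mult)
  finally have "((1+d) powr (b+1) - 1) / (b+1) \<le> sqrt 2 powr (b+1) * sqrt (1+d\<^sup>2) powr (b+1) / (b+1)"
    using b by (intro divide_right_mono) auto
  then have "2 powr (\<bar>b\<bar>/2) * (((1+d) powr (b+1) - 1) / (b+1)) \<le>
       2 powr (\<bar>b\<bar>/2) * (sqrt 2 powr (b+1) * sqrt (1+d\<^sup>2) powr (b+1) / (b+1))"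
    by (intro mult_left_mono) auto
  also have "\<dots> = Cw b * sqrt (1+d\<^sup>2) powr (b+1)"
    by (simp add: Cw_def)
  finally show ?thesis .
qed

lemma int_weight_left:
  fixes b x y :: real
  assumes b: "b > -1" and xy: "x \<le> y"
  shows "integral {x..y} (\<lambda>s. sqrt (1+(s-x)\<^sup>2) powr b) \<le> Cw b * sqrt (1+(y-x)\<^sup>2) powr (b+1)"
proof -
  define F where "F s = (1+(s-x)) powr (b+1) / (b+1)" for s
  have der: "(F has_vector_derivative (1+(s-x)) powr b) (at s within {x..y})" if "s \<in> {x..y}" for s
  proof -
    have pos: "0 < 1+(s-x)" using that by auto
    have "(F has_real_derivative (1+(s-x)) powr b) (at s within {x..y})"
      unfolding F_def using pos b by (auto intro!: derivative_eq_intros)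
    then show ?thesis by (simp add: has_real_derivative_iff_has_vector_derivative)
  qed
  have ftc: "((\<lambda>s. (1+(s-x)) powr b) has_integral F y - F x) {x..y}"
    by (rule fundamental_theorem_of_calculus[OF xy der])
  have ftc2: "((\<lambda>s. 2 powr (\<bar>b\<bar>/2) * (1+(s-x)) powr b) has_integral 2 powr (\<bar>b\<bar>/2) * (F y - F x)) {x..y}"
    by (intro has_integral_mult_right ftc)
  have int: "((\<lambda>s. sqrt (1+(s-x)\<^sup>2) powr b) has_integral integral {x..y} (\<lambda>s. sqrt (1+(s-x)\<^sup>2) powr b)) {x..y}"
    by (intro integrable_integral integrable_continuous_interval continuous_intros) auto
  have "integral {x..y} (\<lambda>s. sqrt (1+(s-x)\<^sup>2) powr b) \<le> 2 powr (\<bar>b\<bar>/2) * (F y - F x)"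
    by (rule has_integral_le[OF int ftc2]) (auto intro!: sqrt_pow_le_lin)
  also have "F y - F x = ((1+(y-x)) powr (b+1) - 1) / (b+1)"
    by (simp add: F_def diff_divide_distrib)
  also have "2 powr (\<bar>b\<bar>/2) * \<dots> \<le> Cw b * sqrt (1+(y-x)\<^sup>2) powr (b+1)"
    using Cw_final[OF b, of "y-x"] xy by simp
  finally show ?thesis .
qed

lemma int_weight_right:
  fixes b x y :: real
  assumes b: "b > -1" and xy: "x \<le> y"
  shows "integral {x..y} (\<lambda>s. sqrt (1+(y-s)\<^sup>2) powr b) \<le> Cw b * sqrt (1+(y-x)\<^sup>2) powr (b+1)"
proof -
  define F where "F s = - ((1+(y-s)) powr (b+1) / (b+1))" for s
  have der: "(F has_vector_derivative (1+(y-s)) powr b) (at s within {x..y})" if "s \<in> {x..y}" for s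
  proof -
    have pos: "0 < 1+(y-s)" using that by auto
    have "(F has_real_derivative (1+(y-s)) powr b) (at s within {x..y})"
      unfolding F_def using pos b by (auto intro!: derivative_eq_intros)
    then show ?thesis by (simp add: has_real_derivative_iff_has_vector_derivative)
  qed
  have ftc: "((\<lambda>s. (1+(y-s)) powr b) has_integral F y - F x) {x..y}"
    by (rule fundamental_theorem_of_calculus[OF xy der])
  have ftc2: "((\<lambda>s. 2 powr (\<bar>b\<bar>/2) * (1+(y-s)) powr b) has_integral 2 powr (\<bar>b\<bar>/2) * (F y - F x)) {x..y}"
    by (intro has_integral_mult_right ftc)
  have int: "((\<lambda>s. sqrt (1+(y-s)\<^sup>2) powr b) has_integral integral {x..y} (\<lambda>s. sqrt (1+(y-s)\<^sup>2) powr b)) {x..y}"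
    by (intro integrable_integral integrable_continuous_interval continuous_intros) auto
  have "integral {x..y} (\<lambda>s. sqrt (1+(y-s)\<^sup>2) powr b) \<le> 2 powr (\<bar>b\<bar>/2) * (F y - F x)"
    by (rule has_integral_le[OF int ftc2]) (auto intro!: sqrt_pow_le_lin)
  also have "F y - F x = ((1+(y-x)) powr (b+1) - 1) / (b+1)"
    by (simp add: F_def diff_divide_distrib)
  also have "2 powr (\<bar>b\<bar>/2) * \<dots> \<le> Cw b * sqrt (1+(y-x)\<^sup>2) powr (b+1)"
    using Cw_final[OF b, of "y-x"] xy by simp
  finally show ?thesis .
qed

lemma nn_integral_scale3:
  fixes g :: "real^3 \<Rightarrow> ennreal" and c :: real
  assumes g[measurable]: "g \<in> borel_measurable borel" and c: "c \<noteq> 0"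
  shows "(\<integral>\<^sup>+x. g x \<partial>lborel) = ennreal (\<bar>c\<bar>^3) * (\<integral>\<^sup>+x. g (c *\<^sub>R x) \<partial>lborel)"
  by (subst lborel_affine[OF c, of 0])
     (simp add: nn_integral_density nn_integral_distr nn_integral_cmult)

definition hpol :: "real^3 \<Rightarrow> ennreal" where
  "hpol y = indicator {y. 1 \<le> norm y \<and> norm y \<le> exp 1} y"

lemma hpol_meas[measurable]: "hpol \<in> borel_measurable borel"
  unfolding hpol_def by measurable

definition ray :: "(real^3 \<Rightarrow> ennreal) \<Rightarrow> real^3 \<Rightarrow> ennreal" where
  "ray F y = (\<integral>\<^sup>+ s. indicator {0<..} s * F (s *\<^sub>R y) * ennreal (s\<^sup>2) \<partial>lborel)"

lemma ray_meas[measurable]: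
  assumes [measurable]: "F \<in> borel_measurable borel"
  shows "ray F \<in> borel_measurable borel"
  unfolding ray_def by measurable

lemma inv_integral_one:
  fixes a :: real assumes a: "0 < a"
  shows "(\<integral>\<^sup>+ s\<in>{a / exp 1 .. a}. ennreal (1/s) \<partial>lborel) = 1"
proof -
  have le: "a / exp 1 \<le> a" using a by (simp add: divide_le_eq)
  have pos: "0 < a / exp 1" using a by simp
  have "((\<lambda>s. 1/s) has_integral (ln a - ln (a / exp 1))) {a / exp 1 .. a}"
  proof (rule fundamental_theorem_of_calculus[OF le])
    fix s assume s: "s \<in> {a / exp 1 .. a}"
    then have "0 < s" using pos by auto
    then show "(ln has_vector_derivative 1/s) (at s within {a / exp 1 .. a})"
      by (auto intro!: derivative_eq_intros simp: has_real_derivative_iff_has_vector_derivative[symmetric])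
  qed
  moreover have "ln a - ln (a / exp 1) = 1" using a by (simp add: ln_div)
  ultimately have hi: "((\<lambda>s. 1/s) has_integral 1) {a / exp 1 .. a}" by simp
  have "(\<integral>\<^sup>+ s\<in>{a / exp 1 .. a}. ennreal (1/s) \<partial>lborel) = ennreal 1"
    by (rule nn_integral_has_integral_lebesgue'[OF _ hi]) (use pos in auto)
  then show ?thesis by simp
qed

lemma polar:
  assumes Fm[measurable]: "F \<in> borel_measurable borel"
  shows "(\<integral>\<^sup>+ y. hpol y * ray F y \<partial>lborel) = (\<integral>\<^sup>+ x. F x \<partial>lborel)"
proof -
  have "(\<integral>\<^sup>+ y. hpol y * ray F y \<partial>lborel)
      = (\<integral>\<^sup>+ y. \<integral>\<^sup>+ s. hpol y * (indicator {0<..} s * F (s *\<^sub>R y) * ennreal (s\<^sup>2)) \<partial>lborel \<partial>lborel)"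
    unfolding ray_def by (intro nn_integral_cong nn_integral_cmult[symmetric]) measurable
  also have "\<dots> = (\<integral>\<^sup>+ s. \<integral>\<^sup>+ y. hpol y * (indicator {0<..} s * F (s *\<^sub>R y) * ennreal (s\<^sup>2)) \<partial>lborel \<partial>lborel)"
    by (rule lborel_pair.Fubini') measurable
  also have "\<dots> = (\<integral>\<^sup>+ s. \<integral>\<^sup>+ x. indicator {0<..} s * ennreal (1/s) * hpol ((1/s) *\<^sub>R x) * F x \<partial>lborel \<partial>lborel)"
  proof (rule nn_integral_cong)
    fix s :: real
    show "(\<integral>\<^sup>+ y. hpol y * (indicator {0<..} s * F (s *\<^sub>R y) * ennreal (s\<^sup>2)) \<partial>lborel)
        = (\<integral>\<^sup>+ x. indicator {0<..} s * ennreal (1/s) * hpol ((1/s) *\<^sub>R x) * F x \<partial>lborel)"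
    proof (cases "s > 0")
      case False then show ?thesis by simp
    next
      case True
      have sc: "(\<integral>\<^sup>+x. hpol ((1/s) *\<^sub>R x) * F x \<partial>lborel)
          = ennreal (\<bar>s\<bar>^3) * (\<integral>\<^sup>+y. hpol ((1/s) *\<^sub>R (s *\<^sub>R y)) * F (s *\<^sub>R y) \<partial>lborel)"
        using True by (intro nn_integral_scale3) auto
      have "(\<integral>\<^sup>+ y. hpol y * (indicator {0<..} s * F (s *\<^sub>R y) * ennreal (s\<^sup>2)) \<partial>lborel)
          = ennreal (s\<^sup>2) * (\<integral>\<^sup>+y. hpol y * F (s *\<^sub>R y) \<partial>lborel)"
        using True by (subst nn_integral_cmult[symmetric]) (auto intro!: nn_integral_cong simp: mult_ac)
      also have "(\<integral>\<^sup>+y. hpol y * F (s *\<^sub>R y) \<partial>lborel) = ennreal (1/s^3) * (\<integral>\<^sup>+x. hpol ((1/s) *\<^sub>R x) * F x \<partial>lborel)"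
        using True by (simp add: sc mult.assoc[symmetric] ennreal_mult'[symmetric])
      also have "ennreal (s\<^sup>2) * (ennreal (1/s^3) * (\<integral>\<^sup>+x. hpol ((1/s) *\<^sub>R x) * F x \<partial>lborel))
           = ennreal (1/s) * (\<integral>\<^sup>+x. hpol ((1/s) *\<^sub>R x) * F x \<partial>lborel)"
        using True by (simp add: mult.assoc[symmetric] ennreal_mult'[symmetric] power2_eq_square power3_eq_cube)
      also have "\<dots> = (\<integral>\<^sup>+ x. indicator {0<..} s * ennreal (1/s) * hpol ((1/s) *\<^sub>R x) * F x \<partial>lborel)"
        using True by (subst nn_integral_cmult[symmetric]) (auto simp: mult_ac)
      finally show ?thesis .
    qed
  qed
  also have "\<dots> = (\<integral>\<^sup>+ x. \<integral>\<^sup>+ s. indicator {0<..} s * ennreal (1/s) * hpol ((1/s) *\<^sub>R x) * F x \<partial>lborel \<partial>lborel)"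
    by (rule lborel_pair.Fubini') measurable
  also have "\<dots> = (\<integral>\<^sup>+ x. F x \<partial>lborel)"
  proof (rule nn_integral_cong_AE)
    show "AE x in lborel. (\<integral>\<^sup>+ s. indicator {0<..} s * ennreal (1/s) * hpol ((1/s) *\<^sub>R x) * F x \<partial>lborel) = F x"
      using AE_lborel_singleton[of 0]
    proof eventually_elim
      case (elim x)
      then have nx: "0 < norm x" by simp
      have "(\<integral>\<^sup>+ s. indicator {0<..} s * ennreal (1/s) * hpol ((1/s) *\<^sub>R x) * F x \<partial>lborel)
          = (\<integral>\<^sup>+ s\<in>{norm x / exp 1 .. norm x}. ennreal (1/s) \<partial>lborel) * F x"
      proof -
        have "indicator {0<..} s * ennreal (1/s) * hpol ((1/s) *\<^sub>R x) * F x
            = ennreal (1/s) * indicator {norm x / exp 1 .. norm x} s * F x" for s :: real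
        proof (cases "s > 0")
          case True
          have "(1 \<le> norm x / s \<and> norm x / s \<le> exp 1) \<longleftrightarrow> (norm x / exp 1 \<le> s \<and> s \<le> norm x)"
            using True by (auto simp: field_simps)
          then show ?thesis using True
            by (simp add: hpol_def indicator_def divide_inverse mult.commute)
        next
          case False
          have "0 < norm x / exp 1" using nx by simp
          then have "s \<notin> {norm x / exp 1 .. norm x}" using False by auto
          then show ?thesis using False by simp
        qed
        then have "(\<integral>\<^sup>+ s. indicator {0<..} s * ennreal (1/s) * hpol ((1/s) *\<^sub>R x) * F x \<partial>lborel)
            = (\<integral>\<^sup>+ s. F x * (ennreal (1/s) * indicator {norm x / exp 1 .. norm x} s) \<partial>lborel)"
          by (simp add: mult_ac)
        also have "\<dots> = F x * (\<integral>\<^sup>+ s. ennreal (1/s) * indicator {norm x / exp 1 .. norm x} s \<partial>lborel)"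
          by (rule nn_integral_cmult) measurable
        finally show ?thesis by (simp add: mult.commute)
      qed
      also have "\<dots> = F x" using inv_integral_one[OF nx] by simp
      finally show ?case .
    qed
  qed
  finally show ?thesis .
qed

lemma ray_scale:
  assumes Fm[measurable]: "F \<in> borel_measurable borel" and y: "y \<noteq> 0"
  shows "ray F (y /\<^sub>R norm y) = ennreal (norm y ^ 3) * ray F y"
proof -
  let ?L = "norm y"
  have L: "0 < ?L" using y by simp
  have "ray F (y /\<^sub>R ?L) = (\<integral>\<^sup>+ r. indicator {0<..} r * F (r *\<^sub>R (y /\<^sub>R ?L)) * ennreal (r\<^sup>2) \<partial>lborel)"
    by (simp add: ray_def)
  also have "\<dots> = ennreal \<bar>?L\<bar> * (\<integral>\<^sup>+ s. indicator {0<..} (0 + ?L * s) * F ((0 + ?L * s) *\<^sub>R (y /\<^sub>R ?L)) * ennreal ((0 + ?L * s)\<^sup>2) \<partial>lborel)"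
    using L by (intro nn_integral_real_affine) auto
  also have "\<dots> = ennreal ?L * (\<integral>\<^sup>+ s. ennreal (?L\<^sup>2) * (indicator {0<..} s * F (s *\<^sub>R y) * ennreal (s\<^sup>2)) \<partial>lborel)"
  proof -
    have "indicator {0<..} (0 + ?L * s) * F ((0 + ?L * s) *\<^sub>R (y /\<^sub>R ?L)) * ennreal ((0 + ?L * s)\<^sup>2)
        = ennreal (?L\<^sup>2) * (indicator {0<..} s * F (s *\<^sub>R y) * ennreal (s\<^sup>2))" for s
    proof -
      have i: "indicator {0<..} (?L * s) = (indicator {0<..} s :: ennreal)"
        using L by (simp add: indicator_def zero_less_mult_iff)
      have v: "(?L * s) *\<^sub>R (y /\<^sub>R ?L) = s *\<^sub>R y" using L by simp
      have e: "ennreal ((?L * s)\<^sup>2) = ennreal (?L\<^sup>2) * ennreal (s\<^sup>2)"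
        by (simp add: power_mult_distrib ennreal_mult)
      show ?thesis unfolding add_0_left i v e by (simp add: mult_ac)
    qed
    then show ?thesis using L by simp
  qed
  also have "\<dots> = ennreal ?L * (ennreal (?L\<^sup>2) * ray F y)"
    unfolding ray_def by (subst nn_integral_cmult) auto
  also have "\<dots> = ennreal (?L ^ 3) * ray F y"
    by (simp add: mult.assoc[symmetric] ennreal_mult[symmetric] power3_eq_cube power2_eq_square)
  finally show ?thesis .
qed

lemma polar_compare:
  fixes F G E :: "real^3 \<Rightarrow> ennreal" and C :: ennreal
  assumes [measurable]: "F \<in> borel_measurable borel" "G \<in> borel_measurable borel" "E \<in> borel_measurable borel"
  and Efin: "(\<integral>\<^sup>+ x. E x \<partial>lborel) < \<infinity>"
  and ray_ineq: "\<And>\<omega>. norm \<omega> = 1 \<Longrightarrow> ray E \<omega> < \<infinity> \<Longrightarrow> ray F \<omega> \<le> C * ray G \<omega>"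
  shows "(\<integral>\<^sup>+ x. F x \<partial>lborel) \<le> C * (\<integral>\<^sup>+ x. G x \<partial>lborel)"
proof -
  have "(\<integral>\<^sup>+ y. hpol y * ray E y \<partial>lborel) \<noteq> \<infinity>" using Efin polar[of E] by simp
  then have ae: "AE y in lborel. hpol y * ray E y \<noteq> \<infinity>"
    by (intro nn_integral_PInf_AE) measurable
  have "(\<integral>\<^sup>+ x. F x \<partial>lborel) = (\<integral>\<^sup>+ y. hpol y * ray F y \<partial>lborel)" by (simp add: polar)
  also have "\<dots> \<le> (\<integral>\<^sup>+ y. C * (hpol y * ray G y) \<partial>lborel)"
  proof (rule nn_integral_mono_AE)
    show "AE y in lborel. hpol y * ray F y \<le> C * (hpol y * ray G y)"
      using ae
    proof eventually_elim
      case (elim y)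
      show ?case
      proof (cases "1 \<le> norm y \<and> norm y \<le> exp 1")
        case False then show ?thesis by (simp add: hpol_def)
      next
        case True
        then have y0: "y \<noteq> 0" by auto
        have h1: "hpol y = 1" using True by (simp add: hpol_def)
        have "ray E y \<noteq> \<infinity>" using elim h1 by simp
        then have "ray E (y /\<^sub>R norm y) < \<infinity>"
          using ray_scale[of E y] y0 by (simp add: ennreal_mult_less_top less_top)
        moreover have "norm (y /\<^sub>R norm y) = 1" using y0 by simp
        ultimately have "ray F (y /\<^sub>R norm y) \<le> C * ray G (y /\<^sub>R norm y)" using ray_ineq by blast
        then have "ennreal (norm y ^ 3) * ray F y \<le> ennreal (norm y ^ 3) * (C * ray G y)"
          using ray_scale[of F y] ray_scale[of G y] y0 by (simp add: mult_ac)
        moreover have "0 < norm y ^ 3" using y0 by simp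
        ultimately have "ray F y \<le> C * ray G y"
          by (metis ennreal_eq_0_iff ennreal_mult_le_mult_iff ennreal_neq_top linorder_not_le)
        then show ?thesis using h1 by simp
      qed
    qed
  qed
  also have "\<dots> = C * (\<integral>\<^sup>+ y. hpol y * ray G y \<partial>lborel)"
    by (rule nn_integral_cmult) measurable
  also have "\<dots> = C * (\<integral>\<^sup>+ x. G x \<partial>lborel)" by (simp add: polar)
  finally show ?thesis .
qed

definition tmr :: "real \<Rightarrow> real \<Rightarrow> real" where "tmr t r = sqrt (1 + (t - r)\<^sup>2)"
definition tpr :: "real \<Rightarrow> real \<Rightarrow> real" where "tpr t r = sqrt (1 + (t + r)\<^sup>2)"
definition rhow :: "real \<Rightarrow> real \<Rightarrow> real \<Rightarrow> real \<Rightarrow> real" where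
  "rhow t p q r = tmr t r powr p * tpr t r powr q"

lemma tmr_pos[simp]: "0 < tmr t r" unfolding tmr_def by (rule real_sqrt_gt_zero) (rule one_plus_sq_gt0)
lemma tpr_pos[simp]: "0 < tpr t r" unfolding tpr_def by (rule real_sqrt_gt_zero) (rule one_plus_sq_gt0)
lemma tmr_ne0[simp]: "tmr t r \<noteq> 0" using tmr_pos[of t r] by linarith
lemma tpr_ne0[simp]: "tpr t r \<noteq> 0" using tpr_pos[of t r] by linarith
lemma rhow_pos[simp]: "0 < rhow t p q r" unfolding rhow_def by (intro mult_pos_pos) auto

lemma cont_tmr[continuous_intros]: "continuous_on S (tmr t)"
  unfolding tmr_def by (intro continuous_intros)
lemma cont_tpr[continuous_intros]: "continuous_on S (tpr t)"
  unfolding tpr_def by (intro continuous_intros)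
lemma cont_rhow[continuous_intros]: "continuous_on S (rhow t p q)"
  unfolding rhow_def by (intro continuous_intros) auto

lemma Cw_nonneg: "b > -1 \<Longrightarrow> 0 \<le> Cw b"
  by (simp add: Cw_def)

lemma pow_cmp:
  fixes X Y q :: real
  assumes X: "0 < X" and Y: "0 < Y"
  and h: "(q \<ge> 0 \<and> X \<le> 2*Y) \<or> (q < 0 \<and> Y \<le> 2*X)"
  shows "X powr q \<le> 2 powr \<bar>q\<bar> * Y powr q"
  using h
proof
  assume a: "q \<ge> 0 \<and> X \<le> 2*Y"
  then have "X powr q \<le> (2*Y) powr q" using X by (intro powr_mono2) auto
  also have "(2*Y) powr q = 2 powr q * Y powr q" using Y by (simp add: powr_mult)
  also have "2 powr q = 2 powr \<bar>q\<bar>" using a by simp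
  finally show ?thesis .
next
  assume a: "q < 0 \<and> Y \<le> 2*X"
  then have "Y / 2 \<le> X" by simp
  then have "X powr q \<le> (Y/2) powr q" using a Y by (intro powr_mono2') auto
  also have "(Y/2) powr q = Y powr q / 2 powr q" using Y by (simp add: powr_divide)
  also have "\<dots> = 2 powr (-q) * Y powr q" by (simp add: powr_minus divide_inverse)
  also have "2 powr (-q) = 2 powr \<bar>q\<bar>" using a by simp
  finally show ?thesis .
qed

lemma integral_shift_bound:
  fixes f g :: "real \<Rightarrow> real"
  assumes "continuous_on {x..y} f" "continuous_on {x..y} g"
  and "\<And>s. s \<in> {x..y} \<Longrightarrow> f s \<le> M * g s"
  shows "integral {x..y} f \<le> M * integral {x..y} g"
proof -
  have "integral {x..y} f \<le> integral {x..y} (\<lambda>s. M * g s)"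
    using assms by (intro integral_le integrable_continuous_interval continuous_intros) auto
  then show ?thesis by simp
qed

lemma weight_ii:
  fixes t p q r :: real
  assumes p: "p > -1" and r: "0 \<le> r" "r \<le> t"
  shows "integral {r..t} (rhow t p q) \<le> 2 powr \<bar>q\<bar> * Cw p * (tmr t r powr (p+1) * tpr t r powr q)"
proof -
  have "integral {r..t} (rhow t p q) \<le> (2 powr \<bar>q\<bar> * tpr t r powr q) * integral {r..t} (\<lambda>s. sqrt (1+(t-s)\<^sup>2) powr p)"
  proof (rule integral_shift_bound)
    show "continuous_on {r..t} (rhow t p q)" by (intro continuous_intros)
    show "continuous_on {r..t} (\<lambda>s. sqrt (1+(t-s)\<^sup>2) powr p)" by (intro continuous_intros) auto
    fix s assume s: "s \<in> {r..t}"
    have "tpr t s powr q \<le> 2 powr \<bar>q\<bar> * tpr t r powr q"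
    proof (rule pow_cmp)
      show "(q \<ge> 0 \<and> tpr t s \<le> 2 * tpr t r) \<or> (q < 0 \<and> tpr t r \<le> 2 * tpr t s)"
      proof (cases "q \<ge> 0")
        case True
        have "1 + (t+s)\<^sup>2 \<le> (2 * tpr t r)\<^sup>2"
        proof -
          have "t + s \<le> 2 * (t + r)" using s r by auto
          then have "(t+s)\<^sup>2 \<le> (2 * (t + r))\<^sup>2" using s r by (intro power_mono) auto
          moreover have "(2 * tpr t r)\<^sup>2 = 4 * (1 + (t+r)\<^sup>2)"
            by (simp add: tpr_def power_mult_distrib)
          moreover have "(2 * (t + r))\<^sup>2 = 4 * (t+r)\<^sup>2" by (simp add: power2_eq_square algebra_simps)
          ultimately show ?thesis by argo
        qed
        then have "tpr t s \<le> 2 * tpr t r" unfolding tpr_def[of t s] by (intro real_le_lsqrt) (auto simp: tpr_def)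
        then show ?thesis using True by auto
      next
        case False
        have "tpr t r \<le> tpr t s" using s r unfolding tpr_def by (intro real_sqrt_le_mono) (simp add: power_mono)
        then show ?thesis using False by (auto intro: order_trans[of _ "tpr t s"] simp: less_imp_le)
      qed
    qed auto
    then have "tmr t s powr p * tpr t s powr q \<le> tmr t s powr p * (2 powr \<bar>q\<bar> * tpr t r powr q)"
      by (intro mult_left_mono) auto
    then show "rhow t p q s \<le> (2 powr \<bar>q\<bar> * tpr t r powr q) * sqrt (1+(t-s)\<^sup>2) powr p"
      by (simp add: rhow_def tmr_def mult_ac)
  qed
  also have "\<dots> \<le> (2 powr \<bar>q\<bar> * tpr t r powr q) * (Cw p * sqrt (1+(t-r)\<^sup>2) powr (p+1))"
    using int_weight_right[OF p r(2)] by (intro mult_left_mono) auto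
  finally show ?thesis by (simp add: tmr_def mult_ac)
qed

lemma weight_i:
  fixes t p q r :: real
  assumes p: "p > -1" and pq: "p + q > -1" and t: "0 \<le> t" and r: "t \<le> r"
  shows "integral {t..r} (rhow t p q) \<le> 2 powr \<bar>q\<bar> * (Cw p + Cw (p+q)) * (tmr t r powr (p+1) * tpr t r powr q)"
proof (cases "q \<ge> 0 \<or> r \<le> 3*t")
  case True
  have "integral {t..r} (rhow t p q) \<le> (2 powr \<bar>q\<bar> * tpr t r powr q) * integral {t..r} (\<lambda>s. sqrt (1+(s-t)\<^sup>2) powr p)"
  proof (rule integral_shift_bound)
    show "continuous_on {t..r} (rhow t p q)" by (intro continuous_intros)
    show "continuous_on {t..r} (\<lambda>s. sqrt (1+(s-t)\<^sup>2) powr p)" by (intro continuous_intros) auto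
    fix s assume s: "s \<in> {t..r}"
    have "tpr t s powr q \<le> 2 powr \<bar>q\<bar> * tpr t r powr q"
    proof (rule pow_cmp)
      show "(q \<ge> 0 \<and> tpr t s \<le> 2 * tpr t r) \<or> (q < 0 \<and> tpr t r \<le> 2 * tpr t s)"
      proof (cases "q \<ge> 0")
        case True
        have "tpr t s \<le> tpr t r" using s t unfolding tpr_def by (intro real_sqrt_le_mono) (simp add: power_mono)
        then show ?thesis using True by (auto intro: order_trans[of _ "tpr t r"] simp: less_imp_le)
      next
        case False
        then have r3: "r \<le> 3*t" using \<open>q \<ge> 0 \<or> r \<le> 3*t\<close> by auto
        have "1 + (t+r)\<^sup>2 \<le> (2 * tpr t s)\<^sup>2"
        proof -
          have "t + r \<le> 2 * (t + s)" using s t r3 by auto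
          then have "(t+r)\<^sup>2 \<le> (2 * (t + s))\<^sup>2" using s t by (intro power_mono) auto
          moreover have "(2 * tpr t s)\<^sup>2 = 4 * (1 + (t+s)\<^sup>2)"
            by (simp add: tpr_def power_mult_distrib)
          moreover have "(2 * (t + s))\<^sup>2 = 4 * (t+s)\<^sup>2" by (simp add: power2_eq_square algebra_simps)
          ultimately show ?thesis by argo
        qed
        then have "tpr t r \<le> 2 * tpr t s" unfolding tpr_def[of t r] by (intro real_le_lsqrt) (auto simp: tpr_def)
        then show ?thesis using False by auto
      qed
    qed auto
    then have "tmr t s powr p * tpr t s powr q \<le> tmr t s powr p * (2 powr \<bar>q\<bar> * tpr t r powr q)"
      by (intro mult_left_mono) auto
    moreover have "tmr t s = sqrt (1+(s-t)\<^sup>2)" by (simp add: tmr_def power2_commute)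
    ultimately show "rhow t p q s \<le> (2 powr \<bar>q\<bar> * tpr t r powr q) * sqrt (1+(s-t)\<^sup>2) powr p"
      by (simp add: rhow_def mult_ac)
  qed
  also have "\<dots> \<le> (2 powr \<bar>q\<bar> * tpr t r powr q) * (Cw p * sqrt (1+(r-t)\<^sup>2) powr (p+1))"
    using int_weight_left[OF p r] by (intro mult_left_mono) auto
  also have "\<dots> = 2 powr \<bar>q\<bar> * Cw p * (tmr t r powr (p+1) * tpr t r powr q)"
    by (simp add: tmr_def power2_commute mult_ac)
  also have "\<dots> \<le> 2 powr \<bar>q\<bar> * (Cw p + Cw (p+q)) * (tmr t r powr (p+1) * tpr t r powr q)"
    using Cw_nonneg[OF pq] by (intro mult_right_mono mult_left_mono) auto
  finally show ?thesis .
next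
  case False
  then have q: "q < 0" and r3: "3*t < r" by auto
  have "integral {t..r} (rhow t p q) \<le> 1 * integral {t..r} (\<lambda>s. sqrt (1+(s-t)\<^sup>2) powr (p+q))"
  proof (rule integral_shift_bound)
    show "continuous_on {t..r} (rhow t p q)" by (intro continuous_intros)
    show "continuous_on {t..r} (\<lambda>s. sqrt (1+(s-t)\<^sup>2) powr (p+q))" by (intro continuous_intros) auto
    fix s assume s: "s \<in> {t..r}"
    have tm: "tmr t s = sqrt (1+(s-t)\<^sup>2)" by (simp add: tmr_def power2_commute)
    have "tmr t s \<le> tpr t s" unfolding tmr_def tpr_def using s t
      by (intro real_sqrt_le_mono) (simp add: power2_commute[of t s] power_mono)
    then have "tpr t s powr q \<le> tmr t s powr q" using q by (intro powr_mono2') auto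
    then have "tmr t s powr p * tpr t s powr q \<le> tmr t s powr p * tmr t s powr q"
      by (intro mult_left_mono) auto
    also have "\<dots> = tmr t s powr (p+q)" by (simp add: powr_add)
    finally show "rhow t p q s \<le> 1 * sqrt (1+(s-t)\<^sup>2) powr (p+q)"
      by (simp add: rhow_def tm)
  qed
  also have "\<dots> \<le> Cw (p+q) * sqrt (1+(r-t)\<^sup>2) powr (p+q+1)"
    using int_weight_left[OF pq r] by simp
  also have "sqrt (1+(r-t)\<^sup>2) powr (p+q+1) = tmr t r powr (p+1) * tmr t r powr q"
    by (simp add: tmr_def power2_commute powr_add[symmetric] add_ac)
  also have "tmr t r powr q \<le> 2 powr \<bar>q\<bar> * tpr t r powr q"
  proof (rule pow_cmp)
    have "1 + (t+r)\<^sup>2 \<le> (2 * tmr t r)\<^sup>2"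
    proof -
      have "t + r \<le> 2 * (r - t)" using r3 by auto
      then have "(t+r)\<^sup>2 \<le> (2 * (r - t))\<^sup>2" using r t by (intro power_mono) auto
      moreover have "(2 * tmr t r)\<^sup>2 = 4 * (1 + (r-t)\<^sup>2)"
        by (simp add: tmr_def power_mult_distrib power2_commute)
      moreover have "(2 * (r - t))\<^sup>2 = 4 * (r-t)\<^sup>2" by (simp add: power2_eq_square algebra_simps)
      ultimately show ?thesis by argo
    qed
    then have "tpr t r \<le> 2 * tmr t r" unfolding tpr_def[of t r] by (intro real_le_lsqrt) (auto simp: tmr_def)
    then show "(q \<ge> 0 \<and> tmr t r \<le> 2 * tpr t r) \<or> (q < 0 \<and> tpr t r \<le> 2 * tmr t r)" using q by auto
  qed auto
  then have "Cw (p+q) * (tmr t r powr (p+1) * tmr t r powr q) \<le> Cw (p+q) * (tmr t r powr (p+1) * (2 powr \<bar>q\<bar> * tpr t r powr q))"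
    using Cw_nonneg[OF pq] by (intro mult_left_mono) auto
  also have "\<dots> \<le> 2 powr \<bar>q\<bar> * (Cw p + Cw (p+q)) * (tmr t r powr (p+1) * tpr t r powr q)"
  proof -
    have "Cw (p+q) \<le> Cw p + Cw (p+q)" using Cw_nonneg[OF p] by simp
    then have "Cw (p+q) * (2 powr \<bar>q\<bar> * (tmr t r powr (p+1) * tpr t r powr q)) \<le> (Cw p + Cw (p+q)) * (2 powr \<bar>q\<bar> * (tmr t r powr (p+1) * tpr t r powr q))"
      by (intro mult_right_mono) auto
    then show ?thesis by (simp add: mult_ac)
  qed
  finally show ?thesis .
qed

lemma amgm_aux:
  fixes rho P w g :: real
  assumes "0 < rho" "0 \<le> P"
  shows "2 * \<bar>w\<bar> * sqrt P * \<bar>g\<bar> \<le> rho * P / 2 + 2 * w\<^sup>2 * g\<^sup>2 / rho"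
proof -
  have "0 \<le> (rho * sqrt P - 2 * \<bar>w\<bar> * \<bar>g\<bar>)\<^sup>2" by simp
  also have "\<dots> = rho\<^sup>2 * P - 4 * rho * \<bar>w\<bar> * \<bar>g\<bar> * sqrt P + 4 * w\<^sup>2 * g\<^sup>2"
    using assms by (simp add: power2_eq_square algebra_simps)
  finally have "4 * rho * \<bar>w\<bar> * \<bar>g\<bar> * sqrt P \<le> rho\<^sup>2 * P + 4 * w\<^sup>2 * g\<^sup>2" by linarith
  then have "rho * (2 * \<bar>w\<bar> * sqrt P * \<bar>g\<bar>) \<le> rho * (rho * P / 2 + 2 * w\<^sup>2 * g\<^sup>2 / rho)"
    using assms by (simp add: algebra_simps power2_eq_square)
  then show ?thesis using assms by (simp add: mult_le_cancel_left)
qed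

lemma hardy_interval:
  fixes P P' w rho sigma g :: "real \<Rightarrow> real" and K a b :: real
  assumes ab: "a \<le> b"
  and dP: "\<And>r. r \<in> {a..b} \<Longrightarrow> (P has_real_derivative P' r) (at r within {a..b})"
  and dw: "\<And>r. r \<in> {a..b} \<Longrightarrow> (w has_real_derivative rho r) (at r within {a..b})"
  and crho: "continuous_on {a..b} rho" and csig: "continuous_on {a..b} sigma"
  and cg: "continuous_on {a..b} g"
  and Pnn: "\<And>r. r\<in>{a..b} \<Longrightarrow> 0 \<le> P r" and rpos: "\<And>r. r \<in> {a..b} \<Longrightarrow> 0 < rho r"
  and Pg: "\<And>r. r\<in>{a..b} \<Longrightarrow> \<bar>P' r\<bar> \<le> 2 * sqrt (P r) * g r"
  and wK: "\<And>r. r\<in>{a..b} \<Longrightarrow> (w r)\<^sup>2 \<le> K * rho r * sigma r"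
  shows "integral {a..b} (\<lambda>r. rho r * P r)
     \<le> 2*(w b * P b - w a * P a) + 4*K*integral {a..b} (\<lambda>r. sigma r * (g r)\<^sup>2)"
proof -
  have cP: "continuous_on {a..b} P"
    using dP by (meson DERIV_continuous continuous_on_eq_continuous_within)
  have ftc: "((\<lambda>r. rho r * P r + w r * P' r) has_integral (w b * P b - w a * P a)) {a..b}"
  proof -
    have "((\<lambda>r. w r * P r) has_integral (w b * P b - w a * P a)) {a..b} \<or> True" by simp
    have "\<And>r. r \<in> {a..b} \<Longrightarrow> ((\<lambda>r. w r * P r) has_vector_derivative (rho r * P r + w r * P' r)) (at r within {a..b})"
    proof -
      fix r assume r: "r \<in> {a..b}"
      have "((\<lambda>r. w r * P r) has_real_derivative (rho r * P r + w r * P' r)) (at r within {a..b})"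
        using DERIV_mult[OF dw[OF r] dP[OF r]] by (simp add: algebra_simps)
      then show "((\<lambda>r. w r * P r) has_vector_derivative (rho r * P r + w r * P' r)) (at r within {a..b})"
        by (simp add: has_real_derivative_iff_has_vector_derivative)
    qed
    from fundamental_theorem_of_calculus[OF ab this] show ?thesis by simp
  qed
  have i1: "((\<lambda>r. rho r * P r) has_integral integral {a..b} (\<lambda>r. rho r * P r)) {a..b}"
    by (intro integrable_integral integrable_continuous_interval continuous_intros crho cP)
  have i2: "((\<lambda>r. sigma r * (g r)\<^sup>2) has_integral integral {a..b} (\<lambda>r. sigma r * (g r)\<^sup>2)) {a..b}"
    by (intro integrable_integral integrable_continuous_interval continuous_intros csig cg)
  have i3: "((\<lambda>r. (1/2) * (rho r * P r) - (2*K) * (sigma r * (g r)\<^sup>2)) has_integral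
      (1/2) * integral {a..b} (\<lambda>r. rho r * P r) - (2*K) * integral {a..b} (\<lambda>r. sigma r * (g r)\<^sup>2)) {a..b}"
    by (intro has_integral_diff has_integral_mult_right i1 i2)
  have pw: "(1/2) * (rho r * P r) - (2*K) * (sigma r * (g r)\<^sup>2) \<le> rho r * P r + w r * P' r"
    if r: "r \<in> {a..b}" for r
  proof -
    have rp: "0 < rho r" using rpos r by auto
    have Pn: "0 \<le> P r" using Pnn r by auto
    have "- (w r * P' r) \<le> \<bar>w r\<bar> * \<bar>P' r\<bar>" by (simp add: abs_mult[symmetric])
    also have "\<dots> \<le> \<bar>w r\<bar> * (2 * sqrt (P r) * g r)"
      using Pg[OF r] by (simp add: mult_left_mono)
    also have "\<dots> \<le> 2 * \<bar>w r\<bar> * sqrt (P r) * \<bar>g r\<bar>"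
    proof -
      have "g r * (\<bar>w r\<bar> * sqrt (P r)) \<le> \<bar>g r\<bar> * (\<bar>w r\<bar> * sqrt (P r))"
        by (intro mult_right_mono) (auto simp: Pn)
      then show ?thesis by (simp add: algebra_simps)
    qed
    also have "\<dots> \<le> rho r * P r / 2 + 2 * (w r)\<^sup>2 * (g r)\<^sup>2 / rho r"
      by (rule amgm_aux[OF rp Pn])
    also have "(w r)\<^sup>2 * (g r)\<^sup>2 / rho r \<le> K * sigma r * (g r)\<^sup>2"
    proof -
      have "(w r)\<^sup>2 * (g r)\<^sup>2 \<le> (K * rho r * sigma r) * (g r)\<^sup>2"
        using wK[OF r] by (simp add: mult_right_mono)
      then show ?thesis using rp by (simp add: divide_le_eq algebra_simps)
    qed
    hence "rho r * P r / 2 + 2 * (w r)\<^sup>2 * (g r)\<^sup>2 / rho r \<le> rho r * P r / 2 + 2 * (K * sigma r * (g r)\<^sup>2)"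
      by simp
    finally show ?thesis by (simp add: algebra_simps)
  qed
  have "(1/2) * integral {a..b} (\<lambda>r. rho r * P r) - (2*K) * integral {a..b} (\<lambda>r. sigma r * (g r)\<^sup>2)
     \<le> w b * P b - w a * P a"
    by (rule has_integral_le[OF i3 ftc pw])
  then show ?thesis by argo
qed

lemma ray_P_deriv:
  fixes u :: "real \<Rightarrow> complex"
  assumes du: "(u has_vector_derivative u') (at r within S)"
  shows "((\<lambda>r. (cmod (u r))\<^sup>2) has_real_derivative 2 * Re (cnj (u r) * u')) (at r within S)"
proof -
  have re: "((\<lambda>x. Re (u x)) has_real_derivative Re u') (at r within S)"
   and im: "((\<lambda>x. Im (u x)) has_real_derivative Im u') (at r within S)"
    using du by (auto simp: has_vector_derivative_complex_iff)
  have "((\<lambda>r. Re (u r) * Re (u r) + Im (u r) * Im (u r)) has_real_derivative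
          (Re u' * Re (u r) + Re u' * Re (u r)) + (Im u' * Im (u r) + Im u' * Im (u r))) (at r within S)"
    by (intro DERIV_add DERIV_mult re im)
  then have "((\<lambda>r. (Re (u r))\<^sup>2 + (Im (u r))\<^sup>2) has_real_derivative
          2 * Re (u r) * Re u' + 2 * Im (u r) * Im u') (at r within S)"
    by (simp add: power2_eq_square algebra_simps)
  moreover have "2 * Re (cnj (u r) * u') = 2 * Re (u r) * Re u' + 2 * Im (u r) * Im u'" by simp
  ultimately show ?thesis by (simp add: cmod_power2 mult.assoc)
qed

lemma ray_P'_bound:
  fixes z z' :: complex and c :: real
  shows "\<bar>2 * Re (cnj z * z')\<bar> \<le> 2 * sqrt ((cmod z)\<^sup>2) * cmod (z' + \<i> * complex_of_real c * z)"
proof -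
  have "Re (cnj z * (z' + \<i> * complex_of_real c * z)) = Re (cnj z * z')"
    by (simp add: algebra_simps)
  then have "\<bar>Re (cnj z * z')\<bar> \<le> cmod (cnj z * (z' + \<i> * complex_of_real c * z))"
    by (metis abs_Re_le_cmod)
  also have "\<dots> = cmod z * cmod (z' + \<i> * complex_of_real c * z)" by (simp add: norm_mult)
  finally show ?thesis by simp
qed

lemma u_cont:
  assumes du: "\<And>r. (u has_vector_derivative u' r) (at r)"
  shows "continuous_on S u"
  using du by (meson continuous_at_imp_continuous_on has_vector_derivative_continuous)

lemma sq_weight:
  fixes t p q r :: real
  shows "(tmr t r powr (p+1) * tpr t r powr q)\<^sup>2 = rhow t p q r * rhow t (p+2) q r"
proof -
  have a: "tmr t r powr (p+1) * tmr t r powr (p+1) = tmr t r powr p * tmr t r powr (p+2)"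
    by (simp add: powr_add[symmetric] algebra_simps)
  show ?thesis unfolding rhow_def power2_eq_square
    using a by (simp add: algebra_simps)
qed

lemma ray_ii:
  fixes u u' :: "real \<Rightarrow> complex" and c :: "real \<Rightarrow> real" and t p q :: real
  assumes p: "p > -1" and t: "0 \<le> t"
  and du: "\<And>r. (u has_vector_derivative u' r) (at r)"
  and cDu: "continuous_on UNIV (\<lambda>r. u' r + \<i> * complex_of_real (c r) * u r)"
  and u0: "u 0 = 0"
  shows "(\<integral>\<^sup>+ r\<in>{0..t}. ennreal (rhow t p q r * (cmod (u r))\<^sup>2) \<partial>lborel)
    \<le> ennreal (4 * (2 powr \<bar>q\<bar> * Cw p)\<^sup>2) *
       (\<integral>\<^sup>+ r\<in>{0..t}. ennreal (rhow t (p+2) q r * (cmod (u' r + \<i> * complex_of_real (c r) * u r))\<^sup>2) \<partial>lborel)"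
proof -
  define K where "K = 2 powr \<bar>q\<bar> * Cw p"
  have K0: "0 \<le> K" unfolding K_def using Cw_nonneg[OF p] by simp
  define w where "w r = integral {0..r} (rhow t p q) - integral {0..t} (rhow t p q)" for r
  define P where "P r = (cmod (u r))\<^sup>2" for r
  define g where "g r = cmod (u' r + \<i> * complex_of_real (c r) * u r)" for r
  have cu: "continuous_on S u" for S using u_cont[OF du] .
  have cDu': "continuous_on S (\<lambda>r. u' r + \<i> * complex_of_real (c r) * u r)" for S
    by (rule continuous_on_subset[OF cDu]) auto
  have crho: "continuous_on S (rhow t p q)" for S by (intro continuous_intros)
  have dw: "(w has_real_derivative rhow t p q r) (at r within {0..t})" if "r \<in> {0..t}" for r
  proof -
    have "((\<lambda>x. integral {0..x} (rhow t p q)) has_real_derivative rhow t p q r) (at r within {0..t})"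
      by (rule integral_has_real_derivative[OF crho that])
    from DERIV_diff[OF this DERIV_const[of "integral {0..t} (rhow t p q)"]] show ?thesis
      unfolding w_def by simp
  qed
  have wt: "w t = 0" by (simp add: w_def)
  have P0: "P 0 = 0" by (simp add: P_def u0)
  have wK: "(w r)\<^sup>2 \<le> K\<^sup>2 * rhow t p q r * rhow t (p+2) q r" if r: "r \<in> {0..t}" for r
  proof -
    have int: "rhow t p q integrable_on {0..t}" by (intro integrable_continuous_interval crho)
    have "integral {0..r} (rhow t p q) + integral {r..t} (rhow t p q) = integral {0..t} (rhow t p q)"
      by (rule Henstock_Kurzweil_Integration.integral_combine) (use r int in auto)
    then have we: "w r = - integral {r..t} (rhow t p q)" unfolding w_def by simp
    have i0: "0 \<le> integral {r..t} (rhow t p q)"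
      by (intro integral_nonneg integrable_continuous_interval crho) (simp add: less_imp_le)
    have i1: "integral {r..t} (rhow t p q) \<le> K * (tmr t r powr (p+1) * tpr t r powr q)"
      using weight_ii[OF p, of r t q] r unfolding K_def by (simp add: mult.assoc)
    have "(w r)\<^sup>2 = (integral {r..t} (rhow t p q))\<^sup>2" using we by simp
    also have "\<dots> \<le> (K * (tmr t r powr (p+1) * tpr t r powr q))\<^sup>2"
      using i0 i1 by (intro power_mono) auto
    also have "\<dots> = K\<^sup>2 * rhow t p q r * rhow t (p+2) q r"
      using sq_weight[of t r p q] by (metis power_mult_distrib mult.assoc)
    finally show ?thesis .
  qed
  have dP: "(P has_real_derivative 2 * Re (cnj (u r) * u' r)) (at r within {0..t})" for r
    unfolding P_def by (rule ray_P_deriv, rule has_vector_derivative_at_within, rule du)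
  have Pg: "\<bar>2 * Re (cnj (u r) * u' r)\<bar> \<le> 2 * sqrt (P r) * g r" for r
    unfolding P_def g_def by (rule ray_P'_bound)
  have cr1: "continuous_on {0..t} (rhow t p q)" by (intro continuous_intros)
  have cr2: "continuous_on {0..t} (rhow t (p+2) q)" by (intro continuous_intros)
  have cg0: "continuous_on {0..t} g" unfolding g_def by (intro continuous_intros cDu')
  have Pnn: "0 \<le> P r" for r by (simp add: P_def)
  have rp: "0 < rhow t p q r" for r by simp
  have H: "integral {0..t} (\<lambda>r. rhow t p q r * P r)
     \<le> 2*(w t * P t - w 0 * P 0) + 4*(K\<^sup>2)*integral {0..t} (\<lambda>r. rhow t (p+2) q r * (g r)\<^sup>2)"
    by (rule hardy_interval[where P'="\<lambda>r. 2 * Re (cnj (u r) * u' r)", OF t dP dw cr1 cr2 cg0 Pnn rp Pg wK])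
  have cP: "continuous_on S P" for S unfolding P_def by (intro continuous_intros cu)
  have cg: "continuous_on S g" for S unfolding g_def
    by (intro continuous_intros cDu')
  have L: "(\<integral>\<^sup>+ r\<in>{0..t}. ennreal (rhow t p q r * P r) \<partial>lborel) = ennreal (integral {0..t} (\<lambda>r. rhow t p q r * P r))"
    by (intro nn_integral_has_integral_lebesgue' integrable_integral integrable_continuous_interval continuous_intros cP)
       (auto simp: P_def less_imp_le)
  have R: "(\<integral>\<^sup>+ r\<in>{0..t}. ennreal (rhow t (p+2) q r * (g r)\<^sup>2) \<partial>lborel) = ennreal (integral {0..t} (\<lambda>r. rhow t (p+2) q r * (g r)\<^sup>2))"
    by (intro nn_integral_has_integral_lebesgue' integrable_integral integrable_continuous_interval continuous_intros cg)
       (auto simp: less_imp_le)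
  have Rnn: "0 \<le> integral {0..t} (\<lambda>r. rhow t (p+2) q r * (g r)\<^sup>2)"
    by (intro integral_nonneg integrable_continuous_interval continuous_intros cg) (auto simp: less_imp_le)
  have "(\<integral>\<^sup>+ r\<in>{0..t}. ennreal (rhow t p q r * P r) \<partial>lborel)
       \<le> ennreal (4*(K\<^sup>2)*integral {0..t} (\<lambda>r. rhow t (p+2) q r * (g r)\<^sup>2))"
    unfolding L using H wt P0 by (intro ennreal_leI) simp
  also have "\<dots> = ennreal (4*K\<^sup>2) * (\<integral>\<^sup>+ r\<in>{0..t}. ennreal (rhow t (p+2) q r * (g r)\<^sup>2) \<partial>lborel)"
    unfolding R using Rnn by (simp add: ennreal_mult)
  finally show ?thesis unfolding K_def P_def g_def .
qed

lemma nn_integral_Ici_le: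
  fixes f :: "real \<Rightarrow> ennreal"
  assumes fm[measurable]: "f \<in> borel_measurable borel"
  and bnd: "\<And>N. N \<ge> t \<Longrightarrow> (\<integral>\<^sup>+ r\<in>{t..N}. f r \<partial>lborel) \<le> B"
  shows "(\<integral>\<^sup>+ r\<in>{t..}. f r \<partial>lborel) \<le> B"
proof -
  define F where "F n r = f r * indicator {t..t + real n} r" for n :: nat and r
  have inc: "incseq F"
    unfolding F_def incseq_def le_fun_def
    by (auto intro!: mult_left_mono simp: indicator_def)
  have sup: "(SUP n. F n r) = f r * indicator {t..} r" for r
  proof (cases "t \<le> r")
    case True
    obtain n :: nat where n: "r - t \<le> real n" using real_arch_simple by blast
    have "F n r = f r" using n True by (simp add: F_def indicator_def)
    moreover have "F m r \<le> f r" for m by (simp add: F_def indicator_def)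
    ultimately have "(SUP n. F n r) = f r"
      by (intro antisym SUP_least) (auto intro: SUP_upper2[of n])
    then show ?thesis using True by simp
  next
    case False then show ?thesis by (simp add: F_def indicator_def)
  qed
  have "(\<integral>\<^sup>+ r\<in>{t..}. f r \<partial>lborel) = (\<integral>\<^sup>+ r. (SUP n. F n r) \<partial>lborel)" by (simp add: sup)
  also have "\<dots> = (SUP n. integral\<^sup>N lborel (F n))"
    by (rule nn_integral_monotone_convergence_SUP[OF inc]) (unfold F_def, measurable)
  also have "\<dots> \<le> B"
  proof (rule SUP_least)
    fix n show "integral\<^sup>N lborel (F n) \<le> B" using bnd[of "t + real n"] by (simp add: F_def[abs_def])
  qed
  finally show ?thesis .
qed

lemma ln_integral:
  fixes a b e :: real
  assumes ab: "0 \<le> a" "a \<le> b" and e: "0 < e"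
  shows "(\<integral>\<^sup>+ r\<in>{a..b}. ennreal (e / (1 + r)) \<partial>lborel) = ennreal (e * (ln (1+b) - ln (1+a)))"
proof -
  have "((\<lambda>r. e / (1 + r)) has_integral (e * ln (1+b) - e * ln (1+a))) {a..b}"
  proof (rule fundamental_theorem_of_calculus[OF ab(2)])
    fix s assume s: "s \<in> {a..b}"
    then have "0 < 1 + s" using ab by auto
    then show "((\<lambda>r. e * ln (1 + r)) has_vector_derivative e / (1+s)) (at s within {a..b})"
      by (auto intro!: derivative_eq_intros simp: has_real_derivative_iff_has_vector_derivative[symmetric])
  qed
  then show ?thesis
    by (subst nn_integral_has_integral_lebesgue') (use ab e in \<open>auto simp: algebra_simps\<close>)
qed

lemma decay_exists:
  fixes P :: "real \<Rightarrow> real" and a t e N :: real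
  assumes Pnn: "\<And>r. 0 \<le> P r" and cP: "continuous_on UNIV P"
  and fin: "(\<integral>\<^sup>+ r\<in>{t..}. ennreal ((1+r\<^sup>2) powr a * P r) \<partial>lborel) < \<infinity>"
  and e: "0 < e"
  shows "\<exists>R\<ge>N. (1+R\<^sup>2) powr a * sqrt (1+R\<^sup>2) * P R < e"
proof (rule ccontr)
  assume "\<not> ?thesis"
  then have big: "\<And>R. R \<ge> N \<Longrightarrow> e \<le> (1+R\<^sup>2) powr a * sqrt (1+R\<^sup>2) * P R" by (auto simp: not_less)
  define N' where "N' = max N (max t 0)"
  define B where "B = (\<integral>\<^sup>+ r\<in>{t..}. ennreal ((1+r\<^sup>2) powr a * P r) \<partial>lborel)"
  have Bfin: "B < \<infinity>" using fin by (simp add: B_def)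
  have pt: "e / (1+r) \<le> (1+r\<^sup>2) powr a * P r" if r: "r \<ge> N'" for r
  proof -
    have r0: "0 \<le> r" using r by (simp add: N'_def)
    have s1: "sqrt (1+r\<^sup>2) \<le> 1 + r"
      using r0 by (intro real_le_lsqrt) (auto simp: power2_eq_square algebra_simps)
    have sp: "0 < sqrt (1+r\<^sup>2)" by (simp add: add_pos_nonneg)
    have "e \<le> ((1+r\<^sup>2) powr a * P r) * sqrt (1+r\<^sup>2)" using big[of r] r by (simp add: N'_def mult_ac)
    also have "\<dots> \<le> ((1+r\<^sup>2) powr a * P r) * (1 + r)"
      using s1 Pnn[of r] by (intro mult_left_mono) auto
    finally show ?thesis using r0 by (simp add: divide_le_eq mult.commute)
  qed
  have mono: "ennreal (e * (ln (1+M) - ln (1+N'))) \<le> B" if M: "M \<ge> N'" for M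
  proof -
    have N0: "0 \<le> N'" by (simp add: N'_def)
    have "ennreal (e * (ln (1+M) - ln (1+N'))) = (\<integral>\<^sup>+ r\<in>{N'..M}. ennreal (e / (1 + r)) \<partial>lborel)"
      using ln_integral[OF N0 M e] by simp
    also have "\<dots> \<le> (\<integral>\<^sup>+ r\<in>{t..}. ennreal ((1+r\<^sup>2) powr a * P r) \<partial>lborel)"
    proof (rule nn_integral_mono)
      fix r
      show "ennreal (e / (1 + r)) * indicator {N'..M} r \<le> ennreal ((1 + r\<^sup>2) powr a * P r) * indicator {t..} r"
      proof (cases "r \<in> {N'..M}")
        case True
        then have "t \<le> r" "N' \<le> r" by (auto simp: N'_def)
        then show ?thesis using True pt[of r] by (auto intro: ennreal_leI)
      qed simp
    qed
    finally show ?thesis by (simp add: B_def)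
  qed
  define b where "b = enn2real B"
  have Bb: "B = ennreal b" and b0: "0 \<le> b" using Bfin by (auto simp: b_def ennreal_enn2real_if less_top)
  define M where "M = exp (b / e + ln (1+N') + 1) - 1"
  have N0: "0 \<le> N'" by (simp add: N'_def)
  have lnM: "ln (1+M) = b / e + ln (1+N') + 1" by (simp add: M_def)
  have "M \<ge> N'"
  proof -
    have "ln (1+N') \<le> b / e + ln (1+N') + 1" using b0 e by simp
    then have "exp (ln (1+N')) \<le> exp (b / e + ln (1+N') + 1)" by simp
    then show ?thesis using N0 by (simp add: M_def)
  qed
  from mono[OF this] have "ennreal (e * (b / e + 1)) \<le> ennreal b" using lnM Bb by simp
  then have "e * (b / e + 1) \<le> b" using b0 by (simp add: ennreal_le_iff)
  then show False using e by (simp add: algebra_simps)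
qed

lemma weight_growth:
  fixes t p q R :: real
  assumes p: "p > -1" and t: "0 \<le> t" and R: "t \<le> R"
  shows "tmr t R powr (p+1) * tpr t R powr q \<le> 2 powr \<bar>q\<bar> * ((1+R\<^sup>2) powr ((p+q)/2) * sqrt (1+R\<^sup>2))"
proof -
  define S where "S = sqrt (1+R\<^sup>2)"
  have S0: "0 < S" by (simp add: S_def add_pos_nonneg)
  have tmS: "tmr t R \<le> S" unfolding tmr_def S_def using t R
    by (intro real_sqrt_le_mono) (simp add: power2_commute[of t R] power_mono)
  have a1: "tmr t R powr (p+1) \<le> S powr (p+1)" using tmS p by (intro powr_mono2) (auto simp: less_imp_le)
  have a2: "tpr t R powr q \<le> 2 powr \<bar>q\<bar> * S powr q"
  proof (rule pow_cmp)
    show "(q \<ge> 0 \<and> tpr t R \<le> 2 * S) \<or> (q < 0 \<and> S \<le> 2 * tpr t R)"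
    proof (cases "q \<ge> 0")
      case True
      have "1 + (t+R)\<^sup>2 \<le> (2 * S)\<^sup>2"
      proof -
        have "t + R \<le> 2 * R" using R by auto
        then have "(t+R)\<^sup>2 \<le> (2 * R)\<^sup>2" using R t by (intro power_mono) auto
        moreover have "(2 * S)\<^sup>2 = 4 * (1 + R\<^sup>2)" by (simp add: S_def power_mult_distrib)
        moreover have "(2 * R)\<^sup>2 = 4 * R\<^sup>2" by (simp add: power2_eq_square)
        ultimately show ?thesis by argo
      qed
      then have "tpr t R \<le> 2 * S" unfolding tpr_def by (intro real_le_lsqrt) (use S0 in auto)
      then show ?thesis using True by auto
    next
      case False
      have "S \<le> tpr t R" unfolding S_def tpr_def using t R
        by (intro real_sqrt_le_mono) (simp add: power_mono)
      then show ?thesis using False by (auto intro: order_trans[of _ "tpr t R"])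
    qed
  qed (use S0 in auto)
  have "tmr t R powr (p+1) * tpr t R powr q \<le> S powr (p+1) * (2 powr \<bar>q\<bar> * S powr q)"
    using a1 a2 by (intro mult_mono) auto
  also have "\<dots> = 2 powr \<bar>q\<bar> * S powr (p+q+1)" by (simp add: powr_add[symmetric] mult_ac add_ac)
  also have "S powr (p+q+1) = (1+R\<^sup>2) powr ((p+q)/2) * sqrt (1+R\<^sup>2)"
  proof -
    have "S = (1+R\<^sup>2) powr (1/2)" by (simp add: S_def powr_half_sqrt add_pos_nonneg)
    then have "S powr (p+q+1) = (1+R\<^sup>2) powr ((p+q)/2 + 1/2)" by (simp add: powr_powr field_simps)
    also have "\<dots> = (1+R\<^sup>2) powr ((p+q)/2) * (1+R\<^sup>2) powr (1/2)" by (simp add: powr_add)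
    also have "(1+R\<^sup>2) powr (1/2) = sqrt (1+R\<^sup>2)" by (simp add: powr_half_sqrt add_pos_nonneg)
    finally show ?thesis .
  qed
  finally show ?thesis .
qed

lemma ray_i:
  fixes u u' :: "real \<Rightarrow> complex" and c :: "real \<Rightarrow> real" and t p q :: real
  assumes p: "p > -1" and pq: "p + q > -1" and t: "0 \<le> t"
  and du: "\<And>r. (u has_vector_derivative u' r) (at r)"
  and cDu: "continuous_on UNIV (\<lambda>r. u' r + \<i> * complex_of_real (c r) * u r)"
  and fin: "(\<integral>\<^sup>+ r\<in>{t..}. ennreal ((1+r\<^sup>2) powr ((p+q)/2) * (cmod (u r))\<^sup>2) \<partial>lborel) < \<infinity>"
  shows "(\<integral>\<^sup>+ r\<in>{t..}. ennreal (rhow t p q r * (cmod (u r))\<^sup>2) \<partial>lborel)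
    \<le> ennreal (4 * (2 powr \<bar>q\<bar> * (Cw p + Cw (p+q)))\<^sup>2) *
       (\<integral>\<^sup>+ r\<in>{t..}. ennreal (rhow t (p+2) q r * (cmod (u' r + \<i> * complex_of_real (c r) * u r))\<^sup>2) \<partial>lborel)"
proof -
  define K where "K = 2 powr \<bar>q\<bar> * (Cw p + Cw (p+q))"
  have K0: "0 \<le> K" unfolding K_def using Cw_nonneg[OF p] Cw_nonneg[OF pq] by simp
  define P where "P r = (cmod (u r))\<^sup>2" for r
  define g where "g r = cmod (u' r + \<i> * complex_of_real (c r) * u r)" for r
  define X where "X = (\<integral>\<^sup>+ r\<in>{t..}. ennreal (rhow t (p+2) q r * (g r)\<^sup>2) \<partial>lborel)"
  define a where "a = (p+q)/2"
  define G where "G R = (1+R\<^sup>2) powr a * sqrt (1+R\<^sup>2) * P R" for R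
  have cu: "continuous_on S u" for S using u_cont[OF du] .
  have cDu': "continuous_on S (\<lambda>r. u' r + \<i> * complex_of_real (c r) * u r)" for S
    by (rule continuous_on_subset[OF cDu]) auto
  have cP: "continuous_on S P" for S unfolding P_def by (intro continuous_intros cu)
  have cg: "continuous_on S g" for S unfolding g_def by (intro continuous_intros cDu')
  have crho: "continuous_on S (rhow t p q)" for S by (intro continuous_intros)
  have Pnn: "0 \<le> P r" for r by (simp add: P_def)
  have rp: "0 < rhow t p q r" for r by simp
  have Pg: "\<bar>2 * Re (cnj (u r) * u' r)\<bar> \<le> 2 * sqrt (P r) * g r" for r
    unfolding P_def g_def by (rule ray_P'_bound)
  have stepA: "(\<integral>\<^sup>+ r\<in>{t..R}. ennreal (rhow t p q r * P r) \<partial>lborel)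
      \<le> ennreal (2 * (K * 2 powr \<bar>q\<bar> * G R)) + ennreal (4 * K\<^sup>2) * X" if R: "t \<le> R" for R
  proof -
    define w where "w r = integral {t..r} (rhow t p q)" for r
    have dw: "(w has_real_derivative rhow t p q r) (at r within {t..R})" if "r \<in> {t..R}" for r
      unfolding w_def by (rule integral_has_real_derivative[OF crho that])
    have dP: "(P has_real_derivative 2 * Re (cnj (u r) * u' r)) (at r within {t..R})" for r
      unfolding P_def by (rule ray_P_deriv, rule has_vector_derivative_at_within, rule du)
    have wb: "0 \<le> w r \<and> w r \<le> K * (tmr t r powr (p+1) * tpr t r powr q)" if r: "t \<le> r" for r
    proof
      show "0 \<le> w r" unfolding w_def
        by (intro integral_nonneg integrable_continuous_interval crho) (simp add: less_imp_le)
      show "w r \<le> K * (tmr t r powr (p+1) * tpr t r powr q)"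
        using weight_i[OF p pq t r] unfolding w_def K_def by (simp add: mult.assoc)
    qed
    have wK: "(w r)\<^sup>2 \<le> K\<^sup>2 * rhow t p q r * rhow t (p+2) q r" if r: "r \<in> {t..R}" for r
    proof -
      have "(w r)\<^sup>2 \<le> (K * (tmr t r powr (p+1) * tpr t r powr q))\<^sup>2"
        using wb[of r] r by (intro power_mono) auto
      also have "\<dots> = K\<^sup>2 * rhow t p q r * rhow t (p+2) q r"
        using sq_weight[of t r p q] by (metis power_mult_distrib mult.assoc)
      finally show ?thesis .
    qed
    have cr1: "continuous_on {t..R} (rhow t p q)" by (intro continuous_intros)
    have cr2: "continuous_on {t..R} (rhow t (p+2) q)" by (intro continuous_intros)
    have cg0: "continuous_on {t..R} g" by (rule cg)
    have H: "integral {t..R} (\<lambda>r. rhow t p q r * P r)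
       \<le> 2*(w R * P R - w t * P t) + 4*(K\<^sup>2)*integral {t..R} (\<lambda>r. rhow t (p+2) q r * (g r)\<^sup>2)"
      by (rule hardy_interval[where P'="\<lambda>r. 2 * Re (cnj (u r) * u' r)", OF R dP dw cr1 cr2 cg0 Pnn rp Pg wK])
    have wt: "w t = 0" by (simp add: w_def)
    have wR: "w R * P R \<le> K * 2 powr \<bar>q\<bar> * G R"
    proof -
      have "w R \<le> K * (2 powr \<bar>q\<bar> * ((1+R\<^sup>2) powr ((p+q)/2) * sqrt (1+R\<^sup>2)))"
      proof -
        have "K * (tmr t R powr (p+1) * tpr t R powr q) \<le> K * (2 powr \<bar>q\<bar> * ((1+R\<^sup>2) powr ((p+q)/2) * sqrt (1+R\<^sup>2)))"
          using weight_growth[OF p t R, of q] K0 by (rule mult_left_mono)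
        then show ?thesis using wb[OF R] by linarith
      qed
      then have "w R * P R \<le> (K * (2 powr \<bar>q\<bar> * ((1+R\<^sup>2) powr ((p+q)/2) * sqrt (1+R\<^sup>2)))) * P R"
        using Pnn[of R] by (intro mult_right_mono) auto
      then show ?thesis by (simp add: G_def a_def mult_ac)
    qed
    have L: "(\<integral>\<^sup>+ r\<in>{t..R}. ennreal (rhow t p q r * P r) \<partial>lborel) = ennreal (integral {t..R} (\<lambda>r. rhow t p q r * P r))"
      by (intro nn_integral_has_integral_lebesgue' integrable_integral integrable_continuous_interval continuous_intros cP)
         (auto simp: P_def less_imp_le)
    have Rq: "(\<integral>\<^sup>+ r\<in>{t..R}. ennreal (rhow t (p+2) q r * (g r)\<^sup>2) \<partial>lborel) = ennreal (integral {t..R} (\<lambda>r. rhow t (p+2) q r * (g r)\<^sup>2))"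
      by (intro nn_integral_has_integral_lebesgue' integrable_integral integrable_continuous_interval continuous_intros cg)
         (auto simp: less_imp_le)
    have Rnn: "0 \<le> integral {t..R} (\<lambda>r. rhow t (p+2) q r * (g r)\<^sup>2)"
      by (intro integral_nonneg integrable_continuous_interval continuous_intros cg) (auto simp: less_imp_le)
    have RX: "(\<integral>\<^sup>+ r\<in>{t..R}. ennreal (rhow t (p+2) q r * (g r)\<^sup>2) \<partial>lborel) \<le> X"
      unfolding X_def by (intro nn_integral_mono) (auto simp: indicator_def)
    have wRn: "0 \<le> w R * P R" using wb[of R] R Pnn[of R] by simp
    have "(\<integral>\<^sup>+ r\<in>{t..R}. ennreal (rhow t p q r * P r) \<partial>lborel)
         \<le> ennreal (2 * (w R * P R) + 4*(K\<^sup>2)*integral {t..R} (\<lambda>r. rhow t (p+2) q r * (g r)\<^sup>2))"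
      unfolding L using H wt by (intro ennreal_leI) simp
    also have "\<dots> = ennreal (2 * (w R * P R)) + ennreal (4*(K\<^sup>2) * integral {t..R} (\<lambda>r. rhow t (p+2) q r * (g r)\<^sup>2))"
      by (rule ennreal_plus) (use wRn Rnn K0 in auto)
    also have "ennreal (4*(K\<^sup>2) * integral {t..R} (\<lambda>r. rhow t (p+2) q r * (g r)\<^sup>2))
       = ennreal (4*(K\<^sup>2)) * ennreal (integral {t..R} (\<lambda>r. rhow t (p+2) q r * (g r)\<^sup>2))"
      by (rule ennreal_mult) (use Rnn in auto)
    finally have A: "(\<integral>\<^sup>+ r\<in>{t..R}. ennreal (rhow t p q r * P r) \<partial>lborel)
      \<le> ennreal (2 * (w R * P R)) + ennreal (4*(K\<^sup>2)) * ennreal (integral {t..R} (\<lambda>r. rhow t (p+2) q r * (g r)\<^sup>2))" .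
    have m1: "ennreal (4*(K\<^sup>2)) * ennreal (integral {t..R} (\<lambda>r. rhow t (p+2) q r * (g r)\<^sup>2)) \<le> ennreal (4*(K\<^sup>2)) * X"
      by (rule mult_left_mono) (use RX Rq in auto)
    have m2: "ennreal (2 * (w R * P R)) \<le> ennreal (2 * (K * 2 powr \<bar>q\<bar> * G R))"
      using wR by (intro ennreal_leI) simp
    have "ennreal (2 * (w R * P R)) + ennreal (4*(K\<^sup>2)) * ennreal (integral {t..R} (\<lambda>r. rhow t (p+2) q r * (g r)\<^sup>2))
      \<le> ennreal (2 * (K * 2 powr \<bar>q\<bar> * G R)) + ennreal (4*(K\<^sup>2)) * X"
      by (rule add_mono[OF m2 m1])
    with A show ?thesis by (rule order_trans)
  qed
  have stepB: "(\<integral>\<^sup>+ r\<in>{t..N}. ennreal (rhow t p q r * P r) \<partial>lborel) \<le> ennreal (4 * K\<^sup>2) * X"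
    if N: "t \<le> N" for N
  proof (rule ennreal_le_epsilon)
    fix e :: real assume e: "0 < e"
    define D where "D = 2 * K * 2 powr \<bar>q\<bar> + 1"
    have D: "0 < D" unfolding D_def using K0 by (simp add: add_nonneg_pos)
    have finP: "(\<integral>\<^sup>+ r\<in>{t..}. ennreal ((1+r\<^sup>2) powr a * P r) \<partial>lborel) < \<infinity>"
      using fin by (simp add: P_def a_def)
    obtain R where R: "R \<ge> N" and GR: "G R < e / D"
      using decay_exists[OF Pnn cP finP, of "e / D" N] e D unfolding G_def by auto
    have G0: "0 \<le> G R" unfolding G_def using Pnn[of R] by simp
    have "2 * (K * 2 powr \<bar>q\<bar> * G R) \<le> D * G R" unfolding D_def using G0 by (simp add: algebra_simps)
    also have "\<dots> \<le> e" using GR D by (simp add: less_imp_le mult.commute pos_less_divide_eq)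
    finally have ee: "2 * (K * 2 powr \<bar>q\<bar> * G R) \<le> e" .
    have "(\<integral>\<^sup>+ r\<in>{t..N}. ennreal (rhow t p q r * P r) \<partial>lborel) \<le> (\<integral>\<^sup>+ r\<in>{t..R}. ennreal (rhow t p q r * P r) \<partial>lborel)"
      using R by (intro nn_integral_mono) (auto simp: indicator_def)
    also have "\<dots> \<le> ennreal (2 * (K * 2 powr \<bar>q\<bar> * G R)) + ennreal (4 * K\<^sup>2) * X"
      using stepA[of R] R N by simp
    also have "\<dots> \<le> ennreal (4 * K\<^sup>2) * X + ennreal e"
      using ee by (simp add: add.commute ennreal_leI add_left_mono)
    finally show "(\<integral>\<^sup>+ r\<in>{t..N}. ennreal (rhow t p q r * P r) \<partial>lborel) \<le> ennreal (4 * K\<^sup>2) * X + ennreal e" .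
  qed
  have meas: "(\<lambda>r. ennreal (rhow t p q r * P r)) \<in> borel_measurable borel"
  proof -
    have "(\<lambda>r. rhow t p q r * P r) \<in> borel_measurable borel"
      by (intro borel_measurable_continuous_onI continuous_intros cP)
    then show ?thesis by measurable
  qed
  have "(\<integral>\<^sup>+ r\<in>{t..}. ennreal (rhow t p q r * P r) \<partial>lborel) \<le> ennreal (4 * K\<^sup>2) * X"
    by (rule nn_integral_Ici_le[OF meas stepB])
  then show ?thesis unfolding K_def X_def P_def g_def by (simp add: power_mult_distrib)
qed

lemma smooth_props:
  fixes f :: "real^3 \<Rightarrow> 'b::real_normed_vector"
  assumes sm: "smooth f"
  shows smooth_cont: "continuous_on UNIV f"
    and smooth_deriv: "(f has_derivative frechet_derivative f (at x)) (at x)"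
    and smooth_partial_cont: "i \<in> Basis \<Longrightarrow> continuous_on UNIV (\<lambda>x. frechet_derivative f (at x) i)"
proof -
  have c0: "f \<in> Ck 0" using sm unfolding smooth_def by blast
  have c1: "f \<in> Ck (Suc 0)" using sm unfolding smooth_def by blast
  show "continuous_on UNIV f" using c0 by simp
  from c1 have d: "f differentiable_on UNIV" by simp
  then have "f differentiable (at x)" by (simp add: differentiable_on_def)
  then show "(f has_derivative frechet_derivative f (at x)) (at x)" by (simp add: frechet_derivative_works)
  show "i \<in> Basis \<Longrightarrow> continuous_on UNIV (\<lambda>x. frechet_derivative f (at x) i)" using c1 by simp
qed

lemma fd_linear_expand:
  fixes f :: "real^3 \<Rightarrow> 'b::real_normed_vector"
  assumes sm: "smooth f"
  shows "frechet_derivative f (at x) v = (\<Sum>i\<in>Basis. (v \<bullet> i) *\<^sub>R frechet_derivative f (at x) i)"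
proof -
  have lin: "linear (frechet_derivative f (at x))"
    using smooth_deriv[OF sm, of x] by (simp add: has_derivative_linear)
  have "frechet_derivative f (at x) v = frechet_derivative f (at x) (\<Sum>i\<in>Basis. (v \<bullet> i) *\<^sub>R i)"
    by (simp only: euclidean_representation)
  also have "\<dots> = (\<Sum>i\<in>Basis. frechet_derivative f (at x) ((v \<bullet> i) *\<^sub>R i))"
    by (rule linear_sum[OF lin])
  also have "\<dots> = (\<Sum>i\<in>Basis. (v \<bullet> i) *\<^sub>R frechet_derivative f (at x) i)"
    by (rule sum.cong) (auto simp only: linear_scale[OF lin])
  finally show ?thesis .
qed

lemma fd_cont:
  fixes f :: "real^3 \<Rightarrow> 'b::real_normed_vector"
  assumes sm: "smooth f"
  shows "continuous_on UNIV (\<lambda>x. frechet_derivative f (at x) v)"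
proof -
  have "continuous_on UNIV (\<lambda>x. \<Sum>i\<in>Basis. (v \<bullet> i) *\<^sub>R frechet_derivative f (at x) i)"
    by (intro continuous_intros smooth_partial_cont[OF sm]) 
  then show ?thesis by (subst fd_linear_expand[OF sm])
qed

lemma ray_phi_deriv:
  fixes phi :: "real^3 \<Rightarrow> complex"
  assumes sm: "smooth phi"
  shows "((\<lambda>r. phi (r *\<^sub>R \<omega>)) has_vector_derivative frechet_derivative phi (at (r *\<^sub>R \<omega>)) \<omega>) (at r)"
proof -
  have l: "((\<lambda>r. r *\<^sub>R \<omega>) has_derivative (\<lambda>h. h *\<^sub>R \<omega>)) (at r)"
    by (auto intro!: derivative_eq_intros)
  have "((\<lambda>r. phi (r *\<^sub>R \<omega>)) has_derivative (\<lambda>h. frechet_derivative phi (at (r *\<^sub>R \<omega>)) (h *\<^sub>R \<omega>))) (at r)"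
    by (rule has_derivative_compose[OF l smooth_deriv[OF sm]])
  moreover have lin: "linear (frechet_derivative phi (at (r *\<^sub>R \<omega>)))"
    using smooth_deriv[OF sm] by (rule has_derivative_linear)
  ultimately have "((\<lambda>r. phi (r *\<^sub>R \<omega>)) has_derivative (\<lambda>h. h *\<^sub>R frechet_derivative phi (at (r *\<^sub>R \<omega>)) \<omega>)) (at r)"
    by (simp add: linear_scale[OF lin])
  then show ?thesis by (simp add: has_vector_derivative_def)
qed

lemma ray_u_deriv:
  fixes phi :: "real^3 \<Rightarrow> complex"
  assumes sm: "smooth phi"
  shows "((\<lambda>r. complex_of_real r * phi (r *\<^sub>R \<omega>)) has_vector_derivative
          (phi (r *\<^sub>R \<omega>) + complex_of_real r * frechet_derivative phi (at (r *\<^sub>R \<omega>)) \<omega>)) (at r)"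
proof -
  have o: "((\<lambda>r. complex_of_real r) has_vector_derivative 1) (at r)"
    using has_vector_derivative_of_real[OF DERIV_ident] by simp
  from has_vector_derivative_mult[OF o ray_phi_deriv[OF sm]] show ?thesis
    by (simp add: add.commute)
qed

lemma rad_term_ray:
  fixes phi :: "real^3 \<Rightarrow> complex" and A :: "real^3 \<Rightarrow> real^3"
  assumes sm: "smooth phi" and w: "norm \<omega> = 1" and r: "0 < r"
  shows "rad_term A phi (r *\<^sub>R \<omega>) =
    ((phi (r *\<^sub>R \<omega>) + complex_of_real r * frechet_derivative phi (at (r *\<^sub>R \<omega>)) \<omega>)
      + \<i> * complex_of_real (A (r *\<^sub>R \<omega>) \<bullet> \<omega>) * (complex_of_real r * phi (r *\<^sub>R \<omega>))) / complex_of_real r"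
proof -
  define x where "x = r *\<^sub>R \<omega>"
  have nx: "norm x = r" using w r by (simp add: x_def)
  have x0: "x \<noteq> 0" using nx r by auto
  have xn: "x /\<^sub>R norm x = \<omega>" using nx r by (simp add: x_def)
  have sx: "sgn x = \<omega>" using xn by (simp add: sgn_div_norm)
  have dn: "((\<lambda>y. complex_of_real (norm y)) has_derivative (\<lambda>h. complex_of_real (h \<bullet> sgn x))) (at x)"
    using has_derivative_of_real[OF has_derivative_norm[OF x0]] .
  have "((\<lambda>y. complex_of_real (norm y) * phi y) has_derivative
        (\<lambda>h. complex_of_real (norm x) * frechet_derivative phi (at x) h + complex_of_real (h \<bullet> sgn x) * phi x)) (at x)"
    by (rule has_derivative_mult[OF dn smooth_deriv[OF sm]])
  then have fd: "frechet_derivative (\<lambda>y. complex_of_real (norm y) * phi y) (at x) =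
        (\<lambda>h. complex_of_real (norm x) * frechet_derivative phi (at x) h + complex_of_real (h \<bullet> sgn x) * phi x)"
    by (rule frechet_derivative_at[symmetric])
  have ww: "\<omega> \<bullet> \<omega> = 1" using w by (simp add: norm_eq_sqrt_inner)
  show ?thesis
  proof -
    have xr: "x /\<^sub>R r = \<omega>" using xn nx by simp
    show ?thesis
      unfolding rad_term_def radial_cov_deriv_def cov_deriv_def x_def[symmetric] fd nx xr sx
      using ww r by (simp add: algebra_simps)
  qed
qed

lemma ray_Du_cont:
  fixes phi :: "real^3 \<Rightarrow> complex" and A :: "real^3 \<Rightarrow> real^3"
  assumes sm: "smooth phi" and smA: "smooth A"
  shows "continuous_on UNIV (\<lambda>r. (phi (r *\<^sub>R \<omega>) + complex_of_real r * frechet_derivative phi (at (r *\<^sub>R \<omega>)) \<omega>)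
      + \<i> * complex_of_real (A (r *\<^sub>R \<omega>) \<bullet> \<omega>) * (complex_of_real r * phi (r *\<^sub>R \<omega>)))"
proof -
  have c1: "continuous_on UNIV (\<lambda>r. phi (r *\<^sub>R \<omega>))"
    by (rule continuous_on_compose2[OF smooth_cont[OF sm]]) (auto intro!: continuous_intros)
  have c2: "continuous_on UNIV (\<lambda>r. frechet_derivative phi (at (r *\<^sub>R \<omega>)) \<omega>)"
    by (rule continuous_on_compose2[OF fd_cont[OF sm]]) (auto intro!: continuous_intros)
  have c3: "continuous_on UNIV (\<lambda>r. A (r *\<^sub>R \<omega>))"
    by (rule continuous_on_compose2[OF smooth_cont[OF smA]]) (auto intro!: continuous_intros)
  show ?thesis by (intro continuous_intros c1 c2 c3)
qed

lemma rad_term_formula: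
  fixes phi :: "real^3 \<Rightarrow> complex" and A :: "real^3 \<Rightarrow> real^3"
  assumes sm: "smooth phi"
  shows "rad_term A phi x = (phi x + frechet_derivative phi (at x) x + \<i> * complex_of_real (A x \<bullet> x) * phi x) / complex_of_real (norm x)"
proof (cases "x = 0")
  case True then show ?thesis by (simp add: rad_term_def)
next
  case False
  define r where "r = norm x"
  have r: "0 < r" using False by (simp add: r_def)
  have dn: "((\<lambda>y. complex_of_real (norm y)) has_derivative (\<lambda>h. complex_of_real (h \<bullet> sgn x))) (at x)"
    using has_derivative_of_real[OF has_derivative_norm[OF False]] .
  have "((\<lambda>y. complex_of_real (norm y) * phi y) has_derivative
        (\<lambda>h. complex_of_real (norm x) * frechet_derivative phi (at x) h + complex_of_real (h \<bullet> sgn x) * phi x)) (at x)"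
    by (rule has_derivative_mult[OF dn smooth_deriv[OF sm]])
  then have fd: "frechet_derivative (\<lambda>y. complex_of_real (norm y) * phi y) (at x) =
        (\<lambda>h. complex_of_real (norm x) * frechet_derivative phi (at x) h + complex_of_real (h \<bullet> sgn x) * phi x)"
    by (rule frechet_derivative_at[symmetric])
  have lin: "linear (frechet_derivative phi (at x))"
    using smooth_deriv[OF sm] by (rule has_derivative_linear)
  have sc: "frechet_derivative phi (at x) (x /\<^sub>R r) = frechet_derivative phi (at x) x / complex_of_real r"
    using r by (simp only: linear_scale[OF lin]) (simp add: scaleR_conv_of_real divide_inverse mult.commute)
  have xs: "(x /\<^sub>R r) \<bullet> sgn x = 1"
    using r False by (simp add: sgn_div_norm r_def inner_commute power2_norm_eq_inner[symmetric] power2_eq_square)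
  have ax: "A x \<bullet> (x /\<^sub>R r) = (A x \<bullet> x) / r" by (simp add: divide_inverse)
  show ?thesis
    unfolding rad_term_def radial_cov_deriv_def cov_deriv_def fd r_def[symmetric] sc xs ax
    using r by (simp add: field_simps)
qed

lemma rad_term_meas:
  fixes phi :: "real^3 \<Rightarrow> complex" and A :: "real^3 \<Rightarrow> real^3"
  assumes sm: "smooth phi" and smA: "smooth A"
  shows "rad_term A phi \<in> borel_measurable borel"
proof -
  have c1: "continuous_on UNIV (\<lambda>x. frechet_derivative phi (at x) x)"
  proof -
    have "continuous_on UNIV (\<lambda>x. \<Sum>i\<in>Basis. (x \<bullet> i) *\<^sub>R frechet_derivative phi (at x) i)"
      by (intro continuous_intros smooth_partial_cont[OF sm])
    then show ?thesis by (subst fd_linear_expand[OF sm])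
  qed
  have cN: "continuous_on UNIV (\<lambda>x. phi x + frechet_derivative phi (at x) x + \<i> * complex_of_real (A x \<bullet> x) * phi x)"
    by (intro continuous_intros c1 smooth_cont[OF sm] smooth_cont[OF smA])
  have [measurable]: "(\<lambda>x. phi x + frechet_derivative phi (at x) x + \<i> * complex_of_real (A x \<bullet> x) * phi x) \<in> borel_measurable borel"
    by (rule borel_measurable_continuous_onI[OF cN])
  have "(\<lambda>x. (phi x + frechet_derivative phi (at x) x + \<i> * complex_of_real (A x \<bullet> x) * phi x) / complex_of_real (norm x)) \<in> borel_measurable borel"
    by measurable
  moreover have "rad_term A phi = (\<lambda>x. (phi x + frechet_derivative phi (at x) x + \<i> * complex_of_real (A x \<bullet> x) * phi x) / complex_of_real (norm x))"
    by (rule ext) (rule rad_term_formula[OF sm])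
  ultimately show ?thesis by simp
qed

lemma rayF:
  fixes f :: "real^3 \<Rightarrow> complex"
  assumes w: "norm \<omega> = 1"
  shows "ray (\<lambda>x. ennreal (tau_minus t x powr p * tau_plus t x powr q * (cmod (f x))\<^sup>2) * indicator {x. Q (norm x)} x) \<omega>
     = (\<integral>\<^sup>+ s\<in>{s. 0 < s \<and> Q s}. ennreal (rhow t p q s * (cmod (complex_of_real s * f (s *\<^sub>R \<omega>)))\<^sup>2) \<partial>lborel)"
  unfolding ray_def
proof (rule nn_integral_cong)
  fix s :: real
  show "indicator {0<..} s * (ennreal (tau_minus t (s *\<^sub>R \<omega>) powr p * tau_plus t (s *\<^sub>R \<omega>) powr q * (cmod (f (s *\<^sub>R \<omega>)))\<^sup>2) * indicator {x. Q (norm x)} (s *\<^sub>R \<omega>)) * ennreal (s\<^sup>2)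
     = ennreal (rhow t p q s * (cmod (complex_of_real s * f (s *\<^sub>R \<omega>)))\<^sup>2) * indicator {s. 0 < s \<and> Q s} s"
  proof (cases "s > 0")
    case True
    have ns: "norm (s *\<^sub>R \<omega>) = s" using True w by simp
    have tm: "tau_minus t (s *\<^sub>R \<omega>) = tmr t s" by (simp only: tau_minus_def tmr_def ns)
    have tp: "tau_plus t (s *\<^sub>R \<omega>) = tpr t s" by (simp only: tau_plus_def tpr_def ns)
    have cm: "(cmod (complex_of_real s * f (s *\<^sub>R \<omega>)))\<^sup>2 = s\<^sup>2 * (cmod (f (s *\<^sub>R \<omega>)))\<^sup>2"
      by (simp add: norm_mult power_mult_distrib)
    have nn: "0 \<le> tmr t s powr p * tpr t s powr q * (cmod (f (s *\<^sub>R \<omega>)))\<^sup>2" by simp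
    show ?thesis using True w
      by (simp add: tm tp cm rhow_def indicator_def ennreal_mult[symmetric] mult_ac)
  next
    case False then show ?thesis by simp
  qed
qed

definition Duf :: "(real^3 \<Rightarrow> real^3) \<Rightarrow> (real^3 \<Rightarrow> complex) \<Rightarrow> real^3 \<Rightarrow> real \<Rightarrow> complex" where
  "Duf A phi \<omega> s = (phi (s *\<^sub>R \<omega>) + complex_of_real s * frechet_derivative phi (at (s *\<^sub>R \<omega>)) \<omega>)
      + \<i> * complex_of_real (A (s *\<^sub>R \<omega>) \<bullet> \<omega>) * (complex_of_real s * phi (s *\<^sub>R \<omega>))"

lemma rayG:
  fixes phi :: "real^3 \<Rightarrow> complex" and A :: "real^3 \<Rightarrow> real^3"
  assumes sm: "smooth phi" and w: "norm \<omega> = 1"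
  shows "ray (\<lambda>x. ennreal (tau_minus t x powr p * tau_plus t x powr q * (cmod (rad_term A phi x))\<^sup>2) * indicator {x. Q (norm x)} x) \<omega>
     = (\<integral>\<^sup>+ s\<in>{s. 0 < s \<and> Q s}. ennreal (rhow t p q s * (cmod (Duf A phi \<omega> s))\<^sup>2) \<partial>lborel)"
  unfolding rayF[OF w]
proof (rule nn_integral_cong)
  fix s :: real
  show "ennreal (rhow t p q s * (cmod (complex_of_real s * rad_term A phi (s *\<^sub>R \<omega>)))\<^sup>2) * indicator {s. 0 < s \<and> Q s} s
      = ennreal (rhow t p q s * (cmod (Duf A phi \<omega> s))\<^sup>2) * indicator {s. 0 < s \<and> Q s} s"
  proof (cases "s > 0")
    case True
    have "complex_of_real s * rad_term A phi (s *\<^sub>R \<omega>) = Duf A phi \<omega> s"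
      using True unfolding rad_term_ray[OF sm w True] Duf_def by simp
    then show ?thesis by simp
  next
    case False then show ?thesis by (simp add: indicator_def)
  qed
qed

lemma rayE:
  fixes phi :: "real^3 \<Rightarrow> complex"
  assumes w: "norm \<omega> = 1"
  shows "ray (\<lambda>x. ennreal ((1 + (norm x)\<^sup>2) powr a * (cmod (phi x))\<^sup>2)) \<omega>
     = (\<integral>\<^sup>+ s\<in>{0<..}. ennreal ((1 + s\<^sup>2) powr a * (cmod (complex_of_real s * phi (s *\<^sub>R \<omega>)))\<^sup>2) \<partial>lborel)"
  unfolding ray_def
proof (rule nn_integral_cong)
  fix s :: real
  show "indicator {0<..} s * ennreal ((1 + (norm (s *\<^sub>R \<omega>))\<^sup>2) powr a * (cmod (phi (s *\<^sub>R \<omega>)))\<^sup>2) * ennreal (s\<^sup>2)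
     = ennreal ((1 + s\<^sup>2) powr a * (cmod (complex_of_real s * phi (s *\<^sub>R \<omega>)))\<^sup>2) * indicator {0<..} s"
  proof (cases "s > 0")
    case True
    have ns: "norm (s *\<^sub>R \<omega>) = s" using True w by simp
    have cm: "(cmod (complex_of_real s * phi (s *\<^sub>R \<omega>)))\<^sup>2 = s\<^sup>2 * (cmod (phi (s *\<^sub>R \<omega>)))\<^sup>2"
      by (simp add: norm_mult power_mult_distrib)
    show ?thesis using True w
      by (simp add: cm indicator_def ennreal_mult[symmetric] mult_ac)
  next
    case False then show ?thesis by simp
  qed
qed

lemma ray_facts:
  fixes phi :: "real^3 \<Rightarrow> complex" and A :: "real^3 \<Rightarrow> real^3"
  assumes sm: "smooth phi" and smA: "smooth A"
  shows "\<And>r. ((\<lambda>s. complex_of_real s * phi (s *\<^sub>R \<omega>)) has_vector_derivative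
          (phi (r *\<^sub>R \<omega>) + complex_of_real r * frechet_derivative phi (at (r *\<^sub>R \<omega>)) \<omega>)) (at r)"
    and "continuous_on UNIV (\<lambda>r. (phi (r *\<^sub>R \<omega>) + complex_of_real r * frechet_derivative phi (at (r *\<^sub>R \<omega>)) \<omega>)
      + \<i> * complex_of_real (A (r *\<^sub>R \<omega>) \<bullet> \<omega>) * (complex_of_real r * phi (r *\<^sub>R \<omega>)))"
  using ray_u_deriv[OF sm] ray_Du_cont[OF sm smA] by auto

lemma meas_rhoP:
  fixes phi :: "real^3 \<Rightarrow> complex"
  assumes sm: "smooth phi"
  shows "(\<lambda>s. ennreal (rhow t p q s * (cmod (complex_of_real s * phi (s *\<^sub>R \<omega>)))\<^sup>2)) \<in> borel_measurable borel"
proof -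
  have c1: "continuous_on UNIV (\<lambda>r. phi (r *\<^sub>R \<omega>))"
    by (rule continuous_on_compose2[OF smooth_cont[OF sm]]) (auto intro!: continuous_intros)
  have "(\<lambda>s. rhow t p q s * (cmod (complex_of_real s * phi (s *\<^sub>R \<omega>)))\<^sup>2) \<in> borel_measurable borel"
    by (intro borel_measurable_continuous_onI continuous_intros c1)
  then show ?thesis by measurable
qed

lemma meas_sigD:
  fixes phi :: "real^3 \<Rightarrow> complex" and A :: "real^3 \<Rightarrow> real^3"
  assumes sm: "smooth phi" and smA: "smooth A"
  shows "(\<lambda>s. ennreal (rhow t p q s * (cmod (Duf A phi \<omega> s))\<^sup>2)) \<in> borel_measurable borel"
proof -
  have c: "continuous_on UNIV (Duf A phi \<omega>)"
    using ray_Du_cont[OF sm smA, of \<omega>] unfolding Duf_def[abs_def] .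
  have "(\<lambda>s. rhow t p q s * (cmod (Duf A phi \<omega> s))\<^sup>2) \<in> borel_measurable borel"
    by (intro borel_measurable_continuous_onI continuous_intros c)
  then show ?thesis by measurable
qed

lemma AE_two_points: "AE s in lborel. s \<noteq> (a::real) \<and> s \<noteq> b"
  using AE_lborel_singleton[of a] AE_lborel_singleton[of b] by eventually_elim auto

lemma ray_region_ii:
  fixes phi :: "real^3 \<Rightarrow> complex" and A :: "real^3 \<Rightarrow> real^3"
  assumes sm: "smooth phi" and smA: "smooth A" and p: "p > -1" and t: "0 \<le> t"
  shows "(\<integral>\<^sup>+ s\<in>{s. 0 < s \<and> s < t}. ennreal (rhow t p q s * (cmod (complex_of_real s * phi (s *\<^sub>R \<omega>)))\<^sup>2) \<partial>lborel)
    \<le> ennreal (4 * (2 powr \<bar>q\<bar> * Cw p)\<^sup>2) *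
      (\<integral>\<^sup>+ s\<in>{s. 0 < s \<and> s < t}. ennreal (rhow t (p+2) q s * (cmod (Duf A phi \<omega> s))\<^sup>2) \<partial>lborel)"
proof -
  have "(\<integral>\<^sup>+ s\<in>{s. 0 < s \<and> s < t}. ennreal (rhow t p q s * (cmod (complex_of_real s * phi (s *\<^sub>R \<omega>)))\<^sup>2) \<partial>lborel)
     \<le> (\<integral>\<^sup>+ s\<in>{0..t}. ennreal (rhow t p q s * (cmod (complex_of_real s * phi (s *\<^sub>R \<omega>)))\<^sup>2) \<partial>lborel)"
    by (intro nn_integral_mono) (auto simp: indicator_def)
  also have "\<dots> \<le> ennreal (4 * (2 powr \<bar>q\<bar> * Cw p)\<^sup>2) *
      (\<integral>\<^sup>+ s\<in>{0..t}. ennreal (rhow t (p+2) q s * (cmod (Duf A phi \<omega> s))\<^sup>2) \<partial>lborel)"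
    unfolding Duf_def by (rule ray_ii[OF p t ray_facts[OF sm smA]]) simp
  also have "(\<integral>\<^sup>+ s\<in>{0..t}. ennreal (rhow t (p+2) q s * (cmod (Duf A phi \<omega> s))\<^sup>2) \<partial>lborel)
     = (\<integral>\<^sup>+ s\<in>{s. 0 < s \<and> s < t}. ennreal (rhow t (p+2) q s * (cmod (Duf A phi \<omega> s))\<^sup>2) \<partial>lborel)"
    by (rule nn_integral_cong_AE) (use AE_two_points[of 0 t] in \<open>eventually_elim, auto simp: indicator_def\<close>)
  finally show ?thesis .
qed

lemma ray_region_i:
  fixes phi :: "real^3 \<Rightarrow> complex" and A :: "real^3 \<Rightarrow> real^3"
  assumes sm: "smooth phi" and smA: "smooth A" and p: "p > -1" and pq: "p + q > -1" and t: "0 \<le> t"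
  and finE: "(\<integral>\<^sup>+ s\<in>{0<..}. ennreal ((1 + s\<^sup>2) powr ((p+q)/2) * (cmod (complex_of_real s * phi (s *\<^sub>R \<omega>)))\<^sup>2) \<partial>lborel) < \<infinity>"
  shows "(\<integral>\<^sup>+ s\<in>{s. 0 < s \<and> t < s}. ennreal (rhow t p q s * (cmod (complex_of_real s * phi (s *\<^sub>R \<omega>)))\<^sup>2) \<partial>lborel)
    \<le> ennreal (4 * (2 powr \<bar>q\<bar> * (Cw p + Cw (p+q)))\<^sup>2) *
      (\<integral>\<^sup>+ s\<in>{s. 0 < s \<and> t < s}. ennreal (rhow t (p+2) q s * (cmod (Duf A phi \<omega> s))\<^sup>2) \<partial>lborel)"
proof -
  have fin: "(\<integral>\<^sup>+ s\<in>{t..}. ennreal ((1 + s\<^sup>2) powr ((p+q)/2) * (cmod (complex_of_real s * phi (s *\<^sub>R \<omega>)))\<^sup>2) \<partial>lborel) < \<infinity>"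
  proof -
    have "(\<integral>\<^sup>+ s\<in>{t..}. ennreal ((1 + s\<^sup>2) powr ((p+q)/2) * (cmod (complex_of_real s * phi (s *\<^sub>R \<omega>)))\<^sup>2) \<partial>lborel)
        \<le> (\<integral>\<^sup>+ s\<in>{0<..}. ennreal ((1 + s\<^sup>2) powr ((p+q)/2) * (cmod (complex_of_real s * phi (s *\<^sub>R \<omega>)))\<^sup>2) \<partial>lborel)"
      by (rule nn_integral_mono_AE) (use AE_lborel_singleton[of 0] in \<open>eventually_elim, insert t, auto simp: indicator_def\<close>)
    then show ?thesis using finE by (rule le_less_trans)
  qed
  have "(\<integral>\<^sup>+ s\<in>{s. 0 < s \<and> t < s}. ennreal (rhow t p q s * (cmod (complex_of_real s * phi (s *\<^sub>R \<omega>)))\<^sup>2) \<partial>lborel)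
     \<le> (\<integral>\<^sup>+ s\<in>{t..}. ennreal (rhow t p q s * (cmod (complex_of_real s * phi (s *\<^sub>R \<omega>)))\<^sup>2) \<partial>lborel)"
    by (intro nn_integral_mono) (auto simp: indicator_def)
  also have "\<dots> \<le> ennreal (4 * (2 powr \<bar>q\<bar> * (Cw p + Cw (p+q)))\<^sup>2) *
      (\<integral>\<^sup>+ s\<in>{t..}. ennreal (rhow t (p+2) q s * (cmod (Duf A phi \<omega> s))\<^sup>2) \<partial>lborel)"
    unfolding Duf_def by (rule ray_i[OF p pq t ray_facts[OF sm smA] fin])
  also have "(\<integral>\<^sup>+ s\<in>{t..}. ennreal (rhow t (p+2) q s * (cmod (Duf A phi \<omega> s))\<^sup>2) \<partial>lborel)
     = (\<integral>\<^sup>+ s\<in>{s. 0 < s \<and> t < s}. ennreal (rhow t (p+2) q s * (cmod (Duf A phi \<omega> s))\<^sup>2) \<partial>lborel)"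
    by (rule nn_integral_cong_AE) (use AE_lborel_singleton[of t] in \<open>eventually_elim, insert t, auto simp: indicator_def\<close>)
  finally show ?thesis .
qed

lemma ray_region_iii:
  fixes phi :: "real^3 \<Rightarrow> complex" and A :: "real^3 \<Rightarrow> real^3"
  assumes sm: "smooth phi" and smA: "smooth A" and p: "p > -1" and pq: "p + q > -1" and t: "0 \<le> t"
  and finE: "(\<integral>\<^sup>+ s\<in>{0<..}. ennreal ((1 + s\<^sup>2) powr ((p+q)/2) * (cmod (complex_of_real s * phi (s *\<^sub>R \<omega>)))\<^sup>2) \<partial>lborel) < \<infinity>"
  shows "(\<integral>\<^sup>+ s\<in>{s. 0 < s}. ennreal (rhow t p q s * (cmod (complex_of_real s * phi (s *\<^sub>R \<omega>)))\<^sup>2) \<partial>lborel)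
    \<le> ennreal (4 * (2 powr \<bar>q\<bar> * (Cw p + Cw (p+q)))\<^sup>2 + 4 * (2 powr \<bar>q\<bar> * Cw p)\<^sup>2) *
      (\<integral>\<^sup>+ s\<in>{s. 0 < s}. ennreal (rhow t (p+2) q s * (cmod (Duf A phi \<omega> s))\<^sup>2) \<partial>lborel)"
proof -
  define f where "f s = ennreal (rhow t p q s * (cmod (complex_of_real s * phi (s *\<^sub>R \<omega>)))\<^sup>2)" for s
  define g where "g s = ennreal (rhow t (p+2) q s * (cmod (Duf A phi \<omega> s))\<^sup>2)" for s
  define C1 where "C1 = 4 * (2 powr \<bar>q\<bar> * (Cw p + Cw (p+q)))\<^sup>2"
  define C2 where "C2 = 4 * (2 powr \<bar>q\<bar> * Cw p)\<^sup>2"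
  have C1: "0 \<le> C1" and C2: "0 \<le> C2" by (simp_all add: C1_def C2_def)
  have fm[measurable]: "f \<in> borel_measurable borel" unfolding f_def[abs_def] by (rule meas_rhoP[OF sm])
  have gm[measurable]: "g \<in> borel_measurable borel" unfolding g_def[abs_def] by (rule meas_sigD[OF sm smA])
  have split: "(\<integral>\<^sup>+ s\<in>{s. 0 < s}. h s \<partial>lborel)
     = (\<integral>\<^sup>+ s\<in>{s. 0 < s \<and> s < t}. h s \<partial>lborel) + (\<integral>\<^sup>+ s\<in>{s. 0 < s \<and> t < s}. h s \<partial>lborel)"
    if [measurable]: "h \<in> borel_measurable borel" for h :: "real \<Rightarrow> ennreal"
  proof -
    have "(\<integral>\<^sup>+ s\<in>{s. 0 < s}. h s \<partial>lborel)
       = (\<integral>\<^sup>+ s. h s * indicator {s. 0 < s \<and> s < t} s + h s * indicator {s. 0 < s \<and> t < s} s \<partial>lborel)"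
      by (rule nn_integral_cong_AE) (use AE_lborel_singleton[of t] in \<open>eventually_elim, auto simp: indicator_def\<close>)
    also have "\<dots> = (\<integral>\<^sup>+ s\<in>{s. 0 < s \<and> s < t}. h s \<partial>lborel) + (\<integral>\<^sup>+ s\<in>{s. 0 < s \<and> t < s}. h s \<partial>lborel)"
      by (rule nn_integral_add) measurable
    finally show ?thesis .
  qed
  have ii: "(\<integral>\<^sup>+ s\<in>{s. 0 < s \<and> s < t}. f s \<partial>lborel) \<le> ennreal C2 * (\<integral>\<^sup>+ s\<in>{s. 0 < s \<and> s < t}. g s \<partial>lborel)"
    unfolding f_def g_def C2_def by (rule ray_region_ii[OF sm smA p t])
  have i: "(\<integral>\<^sup>+ s\<in>{s. 0 < s \<and> t < s}. f s \<partial>lborel) \<le> ennreal C1 * (\<integral>\<^sup>+ s\<in>{s. 0 < s \<and> t < s}. g s \<partial>lborel)"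
    unfolding f_def g_def C1_def by (rule ray_region_i[OF sm smA p pq t finE])
  have "(\<integral>\<^sup>+ s\<in>{s. 0 < s}. f s \<partial>lborel)
     = (\<integral>\<^sup>+ s\<in>{s. 0 < s \<and> s < t}. f s \<partial>lborel) + (\<integral>\<^sup>+ s\<in>{s. 0 < s \<and> t < s}. f s \<partial>lborel)"
    by (rule split[OF fm])
  also have "\<dots> \<le> ennreal C2 * (\<integral>\<^sup>+ s\<in>{s. 0 < s \<and> s < t}. g s \<partial>lborel) + ennreal C1 * (\<integral>\<^sup>+ s\<in>{s. 0 < s \<and> t < s}. g s \<partial>lborel)"
    by (rule add_mono[OF ii i])
  also have "\<dots> \<le> ennreal (C1 + C2) * (\<integral>\<^sup>+ s\<in>{s. 0 < s \<and> s < t}. g s \<partial>lborel) + ennreal (C1 + C2) * (\<integral>\<^sup>+ s\<in>{s. 0 < s \<and> t < s}. g s \<partial>lborel)"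
    using C1 C2 by (intro add_mono mult_right_mono ennreal_leI) auto
  also have "\<dots> = ennreal (C1 + C2) * (\<integral>\<^sup>+ s\<in>{s. 0 < s}. g s \<partial>lborel)"
    by (simp add: split[OF gm] distrib_left)
  finally show ?thesis unfolding f_def g_def C1_def C2_def .
qed

lemma tau_meas[measurable]:
  "tau_minus t \<in> borel_measurable borel" "tau_plus t \<in> borel_measurable borel"
  unfolding tau_minus_def[abs_def] tau_plus_def[abs_def] by measurable

lemma Fw_meas:
  fixes f :: "real^3 \<Rightarrow> complex"
  assumes [measurable]: "f \<in> borel_measurable borel" "S \<in> sets borel"
  shows "(\<lambda>x. ennreal (tau_minus t x powr p * tau_plus t x powr q * (cmod (f x))\<^sup>2) * indicator S x) \<in> borel_measurable borel"
  by measurable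

lemma phi_meas: "smooth phi \<Longrightarrow> (phi::real^3 \<Rightarrow> complex) \<in> borel_measurable borel"
  by (rule borel_measurable_continuous_onI[OF smooth_cont])

lemma main_ii:
  fixes phi :: "real^3 \<Rightarrow> complex" and A :: "real^3 \<Rightarrow> real^3"
  assumes sm: "smooth phi" and smA: "smooth A" and p: "p > -1" and t: "0 \<le> t"
  shows "wint {x. norm x < t} t p q phi \<le> ennreal (4 * (2 powr \<bar>q\<bar> * Cw p)\<^sup>2) * wint {x. norm x < t} t (p + 2) q (rad_term A phi)"
proof -
  have [measurable]: "phi \<in> borel_measurable borel" by (rule phi_meas[OF sm])
  have [measurable]: "rad_term A phi \<in> borel_measurable borel" by (rule rad_term_meas[OF sm smA])
  have "(\<integral>\<^sup>+ x. ennreal (tau_minus t x powr p * tau_plus t x powr q * (cmod (phi x))\<^sup>2) * indicator {x. norm x < t} x \<partial>lborel)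
     \<le> ennreal (4 * (2 powr \<bar>q\<bar> * Cw p)\<^sup>2) * (\<integral>\<^sup>+ x. ennreal (tau_minus t x powr (p+2) * tau_plus t x powr q * (cmod (rad_term A phi x))\<^sup>2) * indicator {x. norm x < t} x \<partial>lborel)"
  proof (rule polar_compare[where E = "\<lambda>_. 0"])
    fix \<omega> :: "real^3" assume w: "norm \<omega> = 1"
    show "ray (\<lambda>x. ennreal (tau_minus t x powr p * tau_plus t x powr q * (cmod (phi x))\<^sup>2) * indicator {x. norm x < t} x) \<omega>
       \<le> ennreal (4 * (2 powr \<bar>q\<bar> * Cw p)\<^sup>2) * ray (\<lambda>x. ennreal (tau_minus t x powr (p+2) * tau_plus t x powr q * (cmod (rad_term A phi x))\<^sup>2) * indicator {x. norm x < t} x) \<omega>"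
      using rayF[OF w, of t p q phi "\<lambda>r. r < t"] rayG[OF sm w, of t "p+2" q A "\<lambda>r. r < t"]
        ray_region_ii[OF sm smA p t, of q \<omega>] by simp
  qed (use Fw_meas in auto)
  then show ?thesis by (simp add: wint_def)
qed

lemma E_fin:
  fixes phi :: "real^3 \<Rightarrow> complex" and A :: "real^3 \<Rightarrow> real^3"
  assumes H: "H1a_norm_sq a A phi < \<infinity>"
  shows "(\<integral>\<^sup>+ x. ennreal ((1 + (norm x)\<^sup>2) powr a * (cmod (phi x))\<^sup>2) \<partial>lborel) < \<infinity>"
proof -
  have "(\<integral>\<^sup>+ x. ennreal ((1 + (norm x)\<^sup>2) powr a * (cmod (phi x))\<^sup>2) \<partial>lborel) \<le> H1a_norm_sq a A phi"
    unfolding H1a_norm_sq_def by (rule add_increasing2) auto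
  then show ?thesis using H by (rule le_less_trans)
qed

lemma main_i:
  fixes phi :: "real^3 \<Rightarrow> complex" and A :: "real^3 \<Rightarrow> real^3"
  assumes sm: "smooth phi" and smA: "smooth A" and p: "p > -1" and pq: "p + q > -1" and t: "0 \<le> t"
  and H: "H1a_norm_sq ((p + q) / 2) A phi < \<infinity>"
  shows "wint {x. t < norm x} t p q phi \<le> ennreal (4 * (2 powr \<bar>q\<bar> * (Cw p + Cw (p+q)))\<^sup>2) * wint {x. t < norm x} t (p + 2) q (rad_term A phi)"
proof -
  have [measurable]: "phi \<in> borel_measurable borel" by (rule phi_meas[OF sm])
  have [measurable]: "rad_term A phi \<in> borel_measurable borel" by (rule rad_term_meas[OF sm smA])
  have "(\<integral>\<^sup>+ x. ennreal (tau_minus t x powr p * tau_plus t x powr q * (cmod (phi x))\<^sup>2) * indicator {x. t < norm x} x \<partial>lborel)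
     \<le> ennreal (4 * (2 powr \<bar>q\<bar> * (Cw p + Cw (p+q)))\<^sup>2) * (\<integral>\<^sup>+ x. ennreal (tau_minus t x powr (p+2) * tau_plus t x powr q * (cmod (rad_term A phi x))\<^sup>2) * indicator {x. t < norm x} x \<partial>lborel)"
  proof (rule polar_compare[where E = "\<lambda>x. ennreal ((1 + (norm x)\<^sup>2) powr ((p+q)/2) * (cmod (phi x))\<^sup>2)"])
    fix \<omega> :: "real^3" assume w: "norm \<omega> = 1"
      and fE: "ray (\<lambda>x. ennreal ((1 + (norm x)\<^sup>2) powr ((p+q)/2) * (cmod (phi x))\<^sup>2)) \<omega> < \<infinity>"
    have finE: "(\<integral>\<^sup>+ s\<in>{0<..}. ennreal ((1 + s\<^sup>2) powr ((p+q)/2) * (cmod (complex_of_real s * phi (s *\<^sub>R \<omega>)))\<^sup>2) \<partial>lborel) < \<infinity>"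
      using fE rayE[OF w, of "(p+q)/2" phi] by simp
    show "ray (\<lambda>x. ennreal (tau_minus t x powr p * tau_plus t x powr q * (cmod (phi x))\<^sup>2) * indicator {x. t < norm x} x) \<omega>
       \<le> ennreal (4 * (2 powr \<bar>q\<bar> * (Cw p + Cw (p+q)))\<^sup>2) * ray (\<lambda>x. ennreal (tau_minus t x powr (p+2) * tau_plus t x powr q * (cmod (rad_term A phi x))\<^sup>2) * indicator {x. t < norm x} x) \<omega>"
      using rayF[OF w, of t p q phi "\<lambda>r. t < r"] rayG[OF sm w, of t "p+2" q A "\<lambda>r. t < r"]
        ray_region_i[OF sm smA p pq t finE] by simp
  next
    show "(\<integral>\<^sup>+ x. ennreal ((1 + (norm x)\<^sup>2) powr ((p+q)/2) * (cmod (phi x))\<^sup>2) \<partial>lborel) < \<infinity>"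
      by (rule E_fin[OF H])
  qed (use Fw_meas in auto)
  then show ?thesis by (simp add: wint_def)
qed

lemma main_iii:
  fixes phi :: "real^3 \<Rightarrow> complex" and A :: "real^3 \<Rightarrow> real^3"
  assumes sm: "smooth phi" and smA: "smooth A" and p: "p > -1" and pq: "p + q > -1" and t: "0 \<le> t"
  and H: "H1a_norm_sq ((p + q) / 2) A phi < \<infinity>"
  shows "wint UNIV t p q phi \<le> ennreal (4 * (2 powr \<bar>q\<bar> * (Cw p + Cw (p+q)))\<^sup>2 + 4 * (2 powr \<bar>q\<bar> * Cw p)\<^sup>2) * wint UNIV t (p + 2) q (rad_term A phi)"
proof -
  have [measurable]: "phi \<in> borel_measurable borel" by (rule phi_meas[OF sm])
  have [measurable]: "rad_term A phi \<in> borel_measurable borel" by (rule rad_term_meas[OF sm smA])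
  have U: "UNIV = {x::real^3. (\<lambda>r. True) (norm x)}" by simp
  have "(\<integral>\<^sup>+ x. ennreal (tau_minus t x powr p * tau_plus t x powr q * (cmod (phi x))\<^sup>2) * indicator {x::real^3. (\<lambda>r. True) (norm x)} x \<partial>lborel)
     \<le> ennreal (4 * (2 powr \<bar>q\<bar> * (Cw p + Cw (p+q)))\<^sup>2 + 4 * (2 powr \<bar>q\<bar> * Cw p)\<^sup>2) * (\<integral>\<^sup>+ x. ennreal (tau_minus t x powr (p+2) * tau_plus t x powr q * (cmod (rad_term A phi x))\<^sup>2) * indicator {x::real^3. (\<lambda>r. True) (norm x)} x \<partial>lborel)"
  proof (rule polar_compare[where E = "\<lambda>x. ennreal ((1 + (norm x)\<^sup>2) powr ((p+q)/2) * (cmod (phi x))\<^sup>2)"])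
    fix \<omega> :: "real^3" assume w: "norm \<omega> = 1"
      and fE: "ray (\<lambda>x. ennreal ((1 + (norm x)\<^sup>2) powr ((p+q)/2) * (cmod (phi x))\<^sup>2)) \<omega> < \<infinity>"
    have finE: "(\<integral>\<^sup>+ s\<in>{0<..}. ennreal ((1 + s\<^sup>2) powr ((p+q)/2) * (cmod (complex_of_real s * phi (s *\<^sub>R \<omega>)))\<^sup>2) \<partial>lborel) < \<infinity>"
      using fE rayE[OF w, of "(p+q)/2" phi] by simp
    show "ray (\<lambda>x. ennreal (tau_minus t x powr p * tau_plus t x powr q * (cmod (phi x))\<^sup>2) * indicator {x::real^3. (\<lambda>r. True) (norm x)} x) \<omega>
       \<le> ennreal (4 * (2 powr \<bar>q\<bar> * (Cw p + Cw (p+q)))\<^sup>2 + 4 * (2 powr \<bar>q\<bar> * Cw p)\<^sup>2) * ray (\<lambda>x. ennreal (tau_minus t x powr (p+2) * tau_plus t x powr q * (cmod (rad_term A phi x))\<^sup>2) * indicator {x::real^3. (\<lambda>r. True) (norm x)} x) \<omega>"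
      unfolding rayF[OF w, of t p q phi "\<lambda>r. True"] rayG[OF sm w, of t "p+2" q A "\<lambda>r. True"]
      using ray_region_iii[OF sm smA p pq t finE] by simp
  next
    show "(\<integral>\<^sup>+ x. ennreal ((1 + (norm x)\<^sup>2) powr ((p+q)/2) * (cmod (phi x))\<^sup>2) \<partial>lborel) < \<infinity>"
      by (rule E_fin[OF H])
  qed (use Fw_meas in auto)
  then show ?thesis unfolding wint_def U[symmetric] by simp
qed

lemma ennreal_const_mono:
  assumes "0 \<le> a" "a \<le> b" "X \<le> ennreal a * Y"
  shows "X \<le> ennreal b * Y"
  using assms(3) by (rule order_trans) (intro mult_right_mono ennreal_leI assms(2), simp)

theorem lemma6p3:
  fixes p q :: real
  shows
   "(-1 < p \<and> 0 < p + 1 + q \<longrightarrow>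
      (\<exists>C::real. C > 0 \<and> (\<forall>(t::real) A phi.
         t \<ge> 0 \<and> smooth A \<and> smooth phi \<and> H1a_norm_sq ((p + q) / 2) A phi < \<infinity> \<longrightarrow>
         wint {x. t < norm x} t p q phi \<le> ennreal C * wint {x. t < norm x} t (p + 2) q (rad_term A phi))))
    \<and> (-1 < p \<and> q < p + 1 \<longrightarrow>
      (\<exists>C::real. C > 0 \<and> (\<forall>(t::real) A phi.
         t \<ge> 0 \<and> smooth A \<and> smooth phi \<and> H1a_norm_sq ((p + q) / 2) A phi < \<infinity> \<longrightarrow>
         wint {x. norm x < t} t p q phi \<le> ennreal C * wint {x. norm x < t} t (p + 2) q (rad_term A phi))))
    \<and> (-1 < p \<and> \<bar>q\<bar> < p + 1 \<longrightarrow>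
      (\<exists>C::real. C > 0 \<and> (\<forall>(t::real) A phi.
         t \<ge> 0 \<and> smooth A \<and> smooth phi \<and> H1a_norm_sq ((p + q) / 2) A phi < \<infinity> \<longrightarrow>
         wint UNIV t p q phi \<le> ennreal C * wint UNIV t (p + 2) q (rad_term A phi))))"
proof (intro conjI impI)
  assume a: "-1 < p \<and> 0 < p + 1 + q"
  then have p: "p > -1" and pq: "p + q > -1" by auto
  define C0 where "C0 = 4 * (2 powr \<bar>q\<bar> * (Cw p + Cw (p+q)))\<^sup>2"
  show "\<exists>C::real. C > 0 \<and> (\<forall>(t::real) A phi.
         t \<ge> 0 \<and> smooth A \<and> smooth phi \<and> H1a_norm_sq ((p + q) / 2) A phi < \<infinity> \<longrightarrow>
         wint {x. t < norm x} t p q phi \<le> ennreal C * wint {x. t < norm x} t (p + 2) q (rad_term A phi))"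
  proof (intro exI[of _ "C0 + 1"] conjI allI impI)
    show "0 < C0 + 1" by (simp add: C0_def add_nonneg_pos)
    fix t :: real and A :: "real^3 \<Rightarrow> real^3" and phi :: "real^3 \<Rightarrow> complex"
    assume h: "t \<ge> 0 \<and> smooth A \<and> smooth phi \<and> H1a_norm_sq ((p + q) / 2) A phi < \<infinity>"
    show "wint {x. t < norm x} t p q phi \<le> ennreal (C0 + 1) * wint {x. t < norm x} t (p + 2) q (rad_term A phi)"
      by (rule ennreal_const_mono[of C0]) (use main_i[OF _ _ p pq] h in \<open>auto simp: C0_def\<close>)
  qed
next
  assume a: "-1 < p \<and> q < p + 1"
  then have p: "p > -1" by auto
  define C0 where "C0 = 4 * (2 powr \<bar>q\<bar> * Cw p)\<^sup>2"
  show "\<exists>C::real. C > 0 \<and> (\<forall>(t::real) A phi.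
         t \<ge> 0 \<and> smooth A \<and> smooth phi \<and> H1a_norm_sq ((p + q) / 2) A phi < \<infinity> \<longrightarrow>
         wint {x. norm x < t} t p q phi \<le> ennreal C * wint {x. norm x < t} t (p + 2) q (rad_term A phi))"
  proof (intro exI[of _ "C0 + 1"] conjI allI impI)
    show "0 < C0 + 1" by (simp add: C0_def add_nonneg_pos)
    fix t :: real and A :: "real^3 \<Rightarrow> real^3" and phi :: "real^3 \<Rightarrow> complex"
    assume h: "t \<ge> 0 \<and> smooth A \<and> smooth phi \<and> H1a_norm_sq ((p + q) / 2) A phi < \<infinity>"
    show "wint {x. norm x < t} t p q phi \<le> ennreal (C0 + 1) * wint {x. norm x < t} t (p + 2) q (rad_term A phi)"
      by (rule ennreal_const_mono[of C0]) (use main_ii[OF _ _ p] h in \<open>auto simp: C0_def\<close>)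
  qed
next
  assume a: "-1 < p \<and> \<bar>q\<bar> < p + 1"
  then have p: "p > -1" and pq: "p + q > -1" by auto
  define C0 where "C0 = 4 * (2 powr \<bar>q\<bar> * (Cw p + Cw (p+q)))\<^sup>2 + 4 * (2 powr \<bar>q\<bar> * Cw p)\<^sup>2"
  show "\<exists>C::real. C > 0 \<and> (\<forall>(t::real) A phi.
         t \<ge> 0 \<and> smooth A \<and> smooth phi \<and> H1a_norm_sq ((p + q) / 2) A phi < \<infinity> \<longrightarrow>
         wint UNIV t p q phi \<le> ennreal C * wint UNIV t (p + 2) q (rad_term A phi))"
  proof (intro exI[of _ "C0 + 1"] conjI allI impI)
    show "0 < C0 + 1" by (simp add: C0_def add_nonneg_pos)
    fix t :: real and A :: "real^3 \<Rightarrow> real^3" and phi :: "real^3 \<Rightarrow> complex"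
    assume h: "t \<ge> 0 \<and> smooth A \<and> smooth phi \<and> H1a_norm_sq ((p + q) / 2) A phi < \<infinity>"
    show "wint UNIV t p q phi \<le> ennreal (C0 + 1) * wint UNIV t (p + 2) q (rad_term A phi)"
      by (rule ennreal_const_mono[of C0]) (use main_iii[OF _ _ p pq] h in \<open>auto simp: C0_def\<close>)
  qed
qed

end
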